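(* For every $n\ge1$ there exists a bijection $\varphi:\mathfrak{S}_n(3124,3214)\to\mathfrak{S}_n(3142,3241)$ such that for every $\pi\in\mathfrak{S}_n(3124,3214)$, $$(\mathrm{Br},\mathrm{Ides},\mathrm{Lrmax},\mathrm{Lrmin},\mathrm{Iar})(\pi)=(\mathrm{Br},\mathrm{Ides},\mathrm{Lrmax},\mathrm{Lrmin},\mathrm{Iar})(\varphi(\pi)).$$
   Context: $\mathfrak{S}_n$ is the set of permutations of $[n]$ written as words $\pi_1\cdots\pi_n$; $\pi$ contains a pattern $P$ (a permutation of $[k]$) if some subsequence $\pi_{i_1}\cdots\pi_{i_k}$, $i_1<\dots<i_k$, is order-isomorphic to $P$, otherwise it avoids $P$; $\mathfrak{S}_n(P_1,\dots,P_r)$ is the set of permutations avoiding all $P_i$. Statistics: $\mathrm{Ides}(\pi)=\{i\in[n-1]:\pi^{-1}(i)>\pi^{-1}(i+1)\}$; $\mathrm{Lrmax}(\pi)$ (resp. $\mathrm{Lrmin}(\pi)$) is the set of letters $\pi_i$ greater (resp. smaller) than all letters to their left; $\mathrm{Iar}(\pi)=\{\pi_1,\dots,\pi_m\}$ with $m$ maximal such that $\pi_1<\dots<\pi_m$. With the convention $\pi_0=\pi_{n+1}=0$, the peak set is $\mathrm{Pk}(\pi)=\{\pi_i:1\le i\le n,\ \pi_{i-1}<\pi_i>\pi_{i+1}\}$, and $\mathrm{Br}(\pi)=\mathrm{Lrmax}(\pi)\cap\mathrm{Pk}(\pi)$. *)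

theory Defs
  imports Main
begin

text \<open>Permutations of [n] as words: lists of length n with distinct entries from {1..n}.
  List positions are 0-based here; position i (0-based) corresponds to pi_(i+1).\<close>

definition perms :: "nat \<Rightarrow> nat list set" where
  "perms n = {p. distinct p \<and> set p = {1..n}}"

definition contains :: "nat list \<Rightarrow> nat list \<Rightarrow> bool" where
  "contains p P \<longleftrightarrow> (\<exists>idx. length idx = length P \<and> sorted_wrt (<) idx
      \<and> (\<forall>i\<in>set idx. i < length p)
      \<and> (\<forall>a<length P. \<forall>b<length P. (p ! (idx ! a) < p ! (idx ! b)) \<longleftrightarrow> (P ! a < P ! b)))"

definition avoids_all :: "nat \<Rightarrow> nat list list \<Rightarrow> nat list set" where
  "avoids_all n Ps = {p \<in> perms n. \<forall>P\<in>set Ps. \<not> contains p P}"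

text \<open>pi^{-1}(x), as a 0-based position\<close>
definition pos :: "nat list \<Rightarrow> nat \<Rightarrow> nat" where
  "pos p x = (LEAST i. i < length p \<and> p ! i = x)"

definition Ides :: "nat list \<Rightarrow> nat set" where
  "Ides p = {i. 1 \<le> i \<and> i \<le> length p - 1 \<and> pos p i > pos p (i + 1)}"

definition Lrmax :: "nat list \<Rightarrow> nat set" where
  "Lrmax p = {p ! i | i. i < length p \<and> (\<forall>j<i. p ! j < p ! i)}"

definition Lrmin :: "nat list \<Rightarrow> nat set" where
  "Lrmin p = {p ! i | i. i < length p \<and> (\<forall>j<i. p ! j > p ! i)}"

text \<open>Iar: the initial ascending run pi_1 < ... < pi_m with m maximal.\<close>
definition Iar :: "nat list \<Rightarrow> nat set" where
  "Iar p = {p ! i | i. i < length p \<and> (\<forall>j<i. p ! j < p ! (j + 1))}"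

text \<open>Letter at 0-based position i, with the convention pi_0 = pi_(n+1) = 0.\<close>
definition ent :: "nat list \<Rightarrow> int \<Rightarrow> nat" where
  "ent p i = (if 0 \<le> i \<and> i < int (length p) then p ! nat i else 0)"

definition Pk :: "nat list \<Rightarrow> nat set" where
  "Pk p = {p ! i | i. i < length p \<and> ent p (int i - 1) < p ! i \<and> p ! i > ent p (int i + 1)}"

definition Br :: "nat list \<Rightarrow> nat set" where
  "Br p = Lrmax p \<inter> Pk p"

end

theory Submission
  imports Defs
begin

definition Aok :: "nat list \<Rightarrow> bool" where
  "Aok p \<longleftrightarrow> \<not>(\<exists>i j k l. i<j \<and> j<k \<and> k<l \<and> l<length p \<and> p!j < p!i \<and> p!k < p!i \<and> p!i < p!l)"
definition Bok :: "nat list \<Rightarrow> bool" where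
  "Bok p \<longleftrightarrow> \<not>(\<exists>i j k l. i<j \<and> j<k \<and> k<l \<and> l<length p \<and> p!j < p!i \<and> p!l < p!i \<and> p!i < p!k)"

lemma all4: "(\<forall>a<(4::nat). P a) \<longleftrightarrow> P 0 \<and> P 1 \<and> P 2 \<and> P 3"
  by (auto simp: numeral_eq_Suc All_less_Suc2)

lemma contains4:
  assumes "length P = 4"
  shows "contains p P \<longleftrightarrow> (\<exists>i j k l. i<j \<and> j<k \<and> k<l \<and> l<length p \<and>
     (\<forall>a<4. \<forall>b<4. ([p!i,p!j,p!k,p!l]!a < [p!i,p!j,p!k,p!l]!b) = (P!a < P!b)))"
proof
  assume "contains p P"
  then obtain idx where h: "length idx = length P" "sorted_wrt (<) idx" "\<forall>i\<in>set idx. i < length p"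
     "\<forall>a<length P. \<forall>b<length P. (p ! (idx ! a) < p ! (idx ! b)) \<longleftrightarrow> (P ! a < P ! b)"
    unfolding contains_def by blast
  then obtain i j k l where idx: "idx = [i,j,k,l]" using assms
    by (cases idx; cases "tl idx"; cases "tl (tl idx)"; cases "tl (tl (tl idx))"; auto simp: numeral_eq_Suc)
  show "\<exists>i j k l. i<j \<and> j<k \<and> k<l \<and> l<length p \<and>
     (\<forall>a<4. \<forall>b<4. ([p!i,p!j,p!k,p!l]!a < [p!i,p!j,p!k,p!l]!b) = (P!a < P!b))"
    apply (rule exI[of _ i], rule exI[of _ j], rule exI[of _ k], rule exI[of _ l])
    using h assms unfolding idx by (auto simp: all4)
next
  assume "\<exists>i j k l. i<j \<and> j<k \<and> k<l \<and> l<length p \<and>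
     (\<forall>a<4. \<forall>b<4. ([p!i,p!j,p!k,p!l]!a < [p!i,p!j,p!k,p!l]!b) = (P!a < P!b))"
  then obtain i j k l where h: "i<j" "j<k" "k<l" "l<length p"
     "\<forall>a<4. \<forall>b<4. ([p!i,p!j,p!k,p!l]!a < [p!i,p!j,p!k,p!l]!b) = (P!a < P!b)" by blast
  show "contains p P" unfolding contains_def
    apply (rule exI[of _ "[i,j,k,l]"])
    using h assms by (auto simp: all4)
qed


lemma c3124: "contains p [3,1,2,4] \<longleftrightarrow> (\<exists>i j k l. i<j \<and> j<k \<and> k<l \<and> l<length p \<and> p!j < p!k \<and> p!k < p!i \<and> p!i < p!l)"
  apply (rule iffI)
   apply (subst (asm) contains4, simp)
   apply (simp add: all4, blast)
  apply (elim exE conjE)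
  subgoal for i j k l unfolding contains_def
    apply (rule exI[of _ "[i,j,k,l]"])
    by (auto simp: less_Suc_eq)
  done
lemma c3214: "contains p [3,2,1,4] \<longleftrightarrow> (\<exists>i j k l. i<j \<and> j<k \<and> k<l \<and> l<length p \<and> p!k < p!j \<and> p!j < p!i \<and> p!i < p!l)"
  apply (rule iffI)
   apply (subst (asm) contains4, simp)
   apply (simp add: all4, blast)
  apply (elim exE conjE)
  subgoal for i j k l unfolding contains_def
    apply (rule exI[of _ "[i,j,k,l]"])
    by (auto simp: less_Suc_eq)
  done
lemma c3142: "contains p [3,1,4,2] \<longleftrightarrow> (\<exists>i j k l. i<j \<and> j<k \<and> k<l \<and> l<length p \<and> p!j < p!l \<and> p!l < p!i \<and> p!i < p!k)"
  apply (rule iffI)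
   apply (subst (asm) contains4, simp)
   apply (simp add: all4, blast)
  apply (elim exE conjE)
  subgoal for i j k l unfolding contains_def
    apply (rule exI[of _ "[i,j,k,l]"])
    by (auto simp: less_Suc_eq)
  done
lemma c3241: "contains p [3,2,4,1] \<longleftrightarrow> (\<exists>i j k l. i<j \<and> j<k \<and> k<l \<and> l<length p \<and> p!l < p!j \<and> p!j < p!i \<and> p!i < p!k)"
  apply (rule iffI)
   apply (subst (asm) contains4, simp)
   apply (simp add: all4, blast)
  apply (elim exE conjE)
  subgoal for i j k l unfolding contains_def
    apply (rule exI[of _ "[i,j,k,l]"])
    by (auto simp: less_Suc_eq)
  done

lemma perms_len: "p \<in> perms n \<Longrightarrow> length p = n"
  unfolding perms_def using distinct_card by fastforce

lemma A_char: "p \<in> avoids_all n [[3,1,2,4],[3,2,1,4]] \<longleftrightarrow> p \<in> perms n \<and> Aok p"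
proof -
  have "p \<in> perms n \<Longrightarrow> (contains p [3,1,2,4] \<or> contains p [3,2,1,4]) \<longleftrightarrow> \<not> Aok p"
  proof -
    assume "p \<in> perms n"
    hence d: "distinct p" by (simp add: perms_def)
    show ?thesis unfolding c3124 c3214 Aok_def
    proof (rule iffI)
      assume "(\<exists>i j k l. i<j \<and> j<k \<and> k<l \<and> l<length p \<and> p!j < p!k \<and> p!k < p!i \<and> p!i < p!l) \<or>
              (\<exists>i j k l. i<j \<and> j<k \<and> k<l \<and> l<length p \<and> p!k < p!j \<and> p!j < p!i \<and> p!i < p!l)"
      then show "\<not>\<not>(\<exists>i j k l. i<j \<and> j<k \<and> k<l \<and> l<length p \<and> p!j < p!i \<and> p!k < p!i \<and> p!i < p!l)"
        by (meson order.strict_trans)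
    next
      assume "\<not>\<not>(\<exists>i j k l. i<j \<and> j<k \<and> k<l \<and> l<length p \<and> p!j < p!i \<and> p!k < p!i \<and> p!i < p!l)"
      then obtain i j k l where h: "i<j" "j<k" "k<l" "l<length p" "p!j < p!i" "p!k < p!i" "p!i < p!l" by blast
      have "p!j \<noteq> p!k" using nth_eq_iff_index_eq[OF d, of j k] h by auto
      then show "(\<exists>i j k l. i<j \<and> j<k \<and> k<l \<and> l<length p \<and> p!j < p!k \<and> p!k < p!i \<and> p!i < p!l) \<or>
              (\<exists>i j k l. i<j \<and> j<k \<and> k<l \<and> l<length p \<and> p!k < p!j \<and> p!j < p!i \<and> p!i < p!l)"
        using h by (metis linorder_neqE_nat)
    qed
  qed
  thus ?thesis unfolding avoids_all_def by auto
qed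

lemma B_char: "p \<in> avoids_all n [[3,1,4,2],[3,2,4,1]] \<longleftrightarrow> p \<in> perms n \<and> Bok p"
proof -
  have "p \<in> perms n \<Longrightarrow> (contains p [3,1,4,2] \<or> contains p [3,2,4,1]) \<longleftrightarrow> \<not> Bok p"
  proof -
    assume "p \<in> perms n"
    hence d: "distinct p" by (simp add: perms_def)
    show ?thesis unfolding c3142 c3241 Bok_def
    proof (rule iffI)
      assume "(\<exists>i j k l. i<j \<and> j<k \<and> k<l \<and> l<length p \<and> p!j < p!l \<and> p!l < p!i \<and> p!i < p!k) \<or>
              (\<exists>i j k l. i<j \<and> j<k \<and> k<l \<and> l<length p \<and> p!l < p!j \<and> p!j < p!i \<and> p!i < p!k)"
      then show "\<not>\<not>(\<exists>i j k l. i<j \<and> j<k \<and> k<l \<and> l<length p \<and> p!j < p!i \<and> p!l < p!i \<and> p!i < p!k)"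
        by (meson order.strict_trans)
    next
      assume "\<not>\<not>(\<exists>i j k l. i<j \<and> j<k \<and> k<l \<and> l<length p \<and> p!j < p!i \<and> p!l < p!i \<and> p!i < p!k)"
      then obtain i j k l where h: "i<j" "j<k" "k<l" "l<length p" "p!j < p!i" "p!l < p!i" "p!i < p!k" by blast
      have "p!j \<noteq> p!l" using nth_eq_iff_index_eq[OF d, of j l] h by auto
      then show "(\<exists>i j k l. i<j \<and> j<k \<and> k<l \<and> l<length p \<and> p!j < p!l \<and> p!l < p!i \<and> p!i < p!k) \<or>
              (\<exists>i j k l. i<j \<and> j<k \<and> k<l \<and> l<length p \<and> p!l < p!j \<and> p!j < p!i \<and> p!i < p!k)"
        using h by (metis linorder_neqE_nat)
    qed
  qed
  thus ?thesis unfolding avoids_all_def by auto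
qed



definition ins :: "nat \<Rightarrow> nat list \<Rightarrow> nat \<Rightarrow> nat list" where
  "ins N s t = take t s @ N # drop t s"

lemma ins_len[simp]: "t \<le> length s \<Longrightarrow> length (ins N s t) = Suc (length s)"
  by (simp add: ins_def)

lemma ins_nth: "t \<le> length s \<Longrightarrow> ins N s t ! i = (if i < t then s!i else if i = t then N else s!(i-1))"
  unfolding ins_def
  by (auto simp: nth_append min_def nth_Cons' not_less)

lemma perms_elems: "s \<in> perms n \<Longrightarrow> i < length s \<Longrightarrow> 1 \<le> s!i \<and> s!i \<le> n"
  using nth_mem[of i s] unfolding perms_def by auto

lemma ins_set: "set (ins N s t) = insert N (set s)"
proof -
  have "set (take t s) \<union> set (drop t s) = set s" by (metis append_take_drop_id set_append)
  thus ?thesis unfolding ins_def by simp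
qed

lemma ins_distinct: "distinct s \<Longrightarrow> N \<notin> set s \<Longrightarrow> distinct (ins N s t)"
proof -
  assume d: "distinct s" and N: "N \<notin> set s"
  have "set (take t s) \<inter> set (drop t s) = {}" using d by (metis append_take_drop_id distinct_append)
  thus ?thesis using d using N unfolding ins_def by (auto dest: in_set_takeD in_set_dropD)
qed

lemma ins_perms: "s \<in> perms n \<Longrightarrow> ins (Suc n) s t \<in> perms (Suc n)"
  unfolding perms_def using ins_set ins_distinct by auto

lemma ins_inj:
  assumes "N \<notin> set s" "N \<notin> set s'" "t \<le> length s" "t' \<le> length s'" "ins N s t = ins N s' t'"
  shows "s = s' \<and> t = t'"
proof -
  have "t = t'"
  proof (rule ccontr)
    assume "t \<noteq> t'"
    then consider "t < t'" | "t' < t" by linarith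
    then show False
    proof cases
      case 1
      have "ins N s' t' ! t = N" using assms 1 ins_nth[of t s N t]
        by simp
      moreover have "ins N s' t' ! t = s' ! t" using ins_nth[of t' s' N t] assms 1 by simp
      ultimately show False using assms 1 by (metis nth_mem order_less_le_trans)
    next
      case 2
      have "ins N s t ! t' = N" using assms 2 ins_nth[of t' s' N t'] by simp
      moreover have "ins N s t ! t' = s ! t'" using ins_nth[of t s N t'] assms 2 by simp
      ultimately show False using assms 2 by (metis nth_mem order_less_le_trans)
    qed
  qed
  moreover have "s = s'"
  proof -
    have "take t s @ drop t s = take t s' @ drop t s'"
      using assms \<open>t = t'\<close> unfolding ins_def
      by (metis append_eq_append_conv length_take min.absorb2 list.inject)
    thus ?thesis by simp
  qed
  ultimately show ?thesis by simp
qed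

lemma ins_remove:
  assumes "q \<in> perms (Suc n)"
  shows "\<exists>s t. s \<in> perms n \<and> t \<le> n \<and> q = ins (Suc n) s t"
proof -
  have d: "distinct q" and st: "set q = {1..Suc n}" using assms unfolding perms_def by auto
  have "Suc n \<in> set q" using st by auto
  then obtain xs ys where q: "q = xs @ Suc n # ys" by (meson split_list)
  let ?s = "xs @ ys"
  have "distinct ?s" using d q by auto
  moreover have "set ?s = set q - {Suc n}" using d q by auto
  moreover have "{1..Suc n} - {Suc n} = {1..n}" by auto
  ultimately have "set ?s = {1..n}" using st by simp
  hence sp: "?s \<in> perms n" using \<open>distinct ?s\<close> unfolding perms_def by simp
  have "length xs \<le> n" using sp perms_len by fastforce
  moreover have "q = ins (Suc n) ?s (length xs)" unfolding ins_def q by simp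
  ultimately show ?thesis using sp by blast
qed

lemma ins_nth': "s \<in> perms n \<Longrightarrow> t \<le> n \<Longrightarrow>
  ins (Suc n) s t ! i = (if i < t then s!i else if i = t then Suc n else s!(i-1))"
  using ins_nth perms_len by metis

lemma ins_le: "s \<in> perms n \<Longrightarrow> t \<le> n \<Longrightarrow> i < Suc n \<Longrightarrow> ins (Suc n) s t ! i \<le> Suc n"
proof -
  assume s: "s \<in> perms n" and t: "t \<le> n" and i: "i < Suc n"
  have len: "length s = n" using s perms_len by blast
  show ?thesis
  proof (cases "i = t")
    case True then show ?thesis using ins_nth'[OF s t] by simp
  next
    case False
    hence "ins (Suc n) s t ! i = s ! (if i < t then i else i - 1)" using ins_nth'[OF s t] by simp
    moreover have "(if i < t then i else i - 1) < length s" using False i t len by auto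
    ultimately show ?thesis using perms_elems[OF s] by (metis le_SucI)
  qed
qed

lemma ins_Aok:
  assumes s: "s \<in> perms n" and t: "t \<le> n"
  shows "Aok (ins (Suc n) s t) \<longleftrightarrow> Aok s \<and> \<not>(\<exists>i j k. i<j \<and> j<k \<and> k<t \<and> s!j<s!i \<and> s!k<s!i)"
proof -
  have len: "length s = n" using s perms_len by blast
  let ?q = "ins (Suc n) s t"
  have qn: "\<And>i. ?q!i = (if i < t then s!i else if i = t then Suc n else s!(i-1))"
    using ins_nth'[OF s t] .
  have ql: "length ?q = Suc n" using t len by simp
  have qle: "\<And>x. x < Suc n \<Longrightarrow> ?q!x \<le> Suc n" using ins_le[OF s t] .
  define f where "f = (\<lambda>x. if x < t then x else Suc x)"
  have fv: "\<And>x. ?q ! (f x) = s!x" unfolding f_def qn by auto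
  have fm: "\<And>x y. x < y \<Longrightarrow> f x < f y" unfolding f_def by auto
  have fl: "\<And>x. x < n \<Longrightarrow> f x < Suc n" unfolding f_def by auto
  define g where "g = (\<lambda>x. if x < t then x else x - 1)"
  have gv: "\<And>x. x \<noteq> t \<Longrightarrow> ?q!x = s!(g x)" unfolding g_def qn by auto
  have gm: "\<And>x y. x < y \<Longrightarrow> x \<noteq> t \<Longrightarrow> y \<noteq> t \<Longrightarrow> g x < g y" unfolding g_def by auto
  have gl: "\<And>x. x < Suc n \<Longrightarrow> x \<noteq> t \<Longrightarrow> g x < n" unfolding g_def using t by auto
  show ?thesis
  proof
    assume A: "Aok ?q"
    have "Aok s"
      unfolding Aok_def
    proof
      assume "\<exists>i j k l. i<j \<and> j<k \<and> k<l \<and> l<length s \<and> s!j < s!i \<and> s!k < s!i \<and> s!i < s!l"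
      then obtain i j k l where h: "i<j" "j<k" "k<l" "l<length s" "s!j < s!i" "s!k < s!i" "s!i < s!l" by blast
      have "f i < f j" "f j < f k" "f k < f l" "f l < length ?q" using h fm fl ql len by auto
      moreover have "?q!(f j) < ?q!(f i)" "?q!(f k) < ?q!(f i)" "?q!(f i) < ?q!(f l)" using h fv by auto
      ultimately show False using A unfolding Aok_def by blast
    qed
    moreover have "\<not>(\<exists>i j k. i<j \<and> j<k \<and> k<t \<and> s!j<s!i \<and> s!k<s!i)"
    proof
      assume "\<exists>i j k. i<j \<and> j<k \<and> k<t \<and> s!j<s!i \<and> s!k<s!i"
      then obtain i j k where h: "i<j" "j<k" "k<t" "s!j<s!i" "s!k<s!i" by blast
      have "?q!i = s!i" "?q!j = s!j" "?q!k = s!k" "?q!t = Suc n" using h qn by auto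
      moreover have "s!i \<le> n" using perms_elems[OF s, of i] h t len by auto
      moreover have "t < length ?q" using ql t by simp
      ultimately show False using A h unfolding Aok_def
        by (metis le_imp_less_Suc)
    qed
    ultimately show "Aok s \<and> \<not>(\<exists>i j k. i<j \<and> j<k \<and> k<t \<and> s!j<s!i \<and> s!k<s!i)" by blast
  next
    assume B: "Aok s \<and> \<not>(\<exists>i j k. i<j \<and> j<k \<and> k<t \<and> s!j<s!i \<and> s!k<s!i)"
    show "Aok ?q" unfolding Aok_def
    proof
      assume "\<exists>i j k l. i<j \<and> j<k \<and> k<l \<and> l<length ?q \<and> ?q!j < ?q!i \<and> ?q!k < ?q!i \<and> ?q!i < ?q!l"
      then obtain i j k l where h: "i<j" "j<k" "k<l" "l<length ?q" "?q!j < ?q!i" "?q!k < ?q!i" "?q!i < ?q!l" by blast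
      have "i < Suc n" "j < Suc n" "k < Suc n" "l < Suc n" using h ql by auto
      hence "?q!i \<le> Suc n" "?q!j \<le> Suc n" "?q!k \<le> Suc n" "?q!l \<le> Suc n" using qle by auto
      hence "i \<noteq> t" "j \<noteq> t" "k \<noteq> t" using h qn by auto
      then consider "l = t" | "l \<noteq> t" by blast
      then show False
      proof cases
        case 1
        then show False using B h qn \<open>i \<noteq> t\<close> \<open>j \<noteq> t\<close> \<open>k \<noteq> t\<close> by auto
      next
        case 2
        have "g i < g j" "g j < g k" "g k < g l" "g l < length s"
          using gm gl h 2 \<open>i \<noteq> t\<close> \<open>j \<noteq> t\<close> \<open>k \<noteq> t\<close> ql len by auto
        moreover have "s!(g j) < s!(g i)" "s!(g k) < s!(g i)" "s!(g i) < s!(g l)"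
          using h gv 2 \<open>i \<noteq> t\<close> \<open>j \<noteq> t\<close> \<open>k \<noteq> t\<close> by auto
        ultimately show False using B unfolding Aok_def by blast
      qed
    qed
  qed
qed

lemma ins_Bok:
  assumes s: "s \<in> perms n" and t: "t \<le> n"
  shows "Bok (ins (Suc n) s t) \<longleftrightarrow> Bok s \<and> \<not>(\<exists>i j l. i<j \<and> j<t \<and> t\<le>l \<and> l<n \<and> s!j<s!i \<and> s!l<s!i)"
proof -
  have len: "length s = n" using s perms_len by blast
  let ?q = "ins (Suc n) s t"
  have qn: "\<And>i. ?q!i = (if i < t then s!i else if i = t then Suc n else s!(i-1))"
    using ins_nth'[OF s t] .
  have ql: "length ?q = Suc n" using t len by simp
  have qle: "\<And>x. x < Suc n \<Longrightarrow> ?q!x \<le> Suc n" using ins_le[OF s t] .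
  define f where "f = (\<lambda>x. if x < t then x else Suc x)"
  have fv: "\<And>x. ?q ! (f x) = s!x" unfolding f_def qn by auto
  have fm: "\<And>x y. x < y \<Longrightarrow> f x < f y" unfolding f_def by auto
  have fl: "\<And>x. x < n \<Longrightarrow> f x < Suc n" unfolding f_def by auto
  define g where "g = (\<lambda>x. if x < t then x else x - 1)"
  have gv: "\<And>x. x \<noteq> t \<Longrightarrow> ?q!x = s!(g x)" unfolding g_def qn by auto
  have gm: "\<And>x y. x < y \<Longrightarrow> x \<noteq> t \<Longrightarrow> y \<noteq> t \<Longrightarrow> g x < g y" unfolding g_def by auto
  have gl: "\<And>x. x < Suc n \<Longrightarrow> x \<noteq> t \<Longrightarrow> g x < n" unfolding g_def using t by auto
  show ?thesis
  proof
    assume A: "Bok ?q"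
    have "Bok s"
      unfolding Bok_def
    proof
      assume "\<exists>i j k l. i<j \<and> j<k \<and> k<l \<and> l<length s \<and> s!j < s!i \<and> s!l < s!i \<and> s!i < s!k"
      then obtain i j k l where h: "i<j" "j<k" "k<l" "l<length s" "s!j < s!i" "s!l < s!i" "s!i < s!k" by blast
      have "f i < f j" "f j < f k" "f k < f l" "f l < length ?q" using h fm fl ql len by auto
      moreover have "?q!(f j) < ?q!(f i)" "?q!(f l) < ?q!(f i)" "?q!(f i) < ?q!(f k)" using h fv by auto
      ultimately show False using A unfolding Bok_def by blast
    qed
    moreover have "\<not>(\<exists>i j l. i<j \<and> j<t \<and> t\<le>l \<and> l<n \<and> s!j<s!i \<and> s!l<s!i)"
    proof
      assume "\<exists>i j l. i<j \<and> j<t \<and> t\<le>l \<and> l<n \<and> s!j<s!i \<and> s!l<s!i"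
      then obtain i j l where h: "i<j" "j<t" "t\<le>l" "l<n" "s!j<s!i" "s!l<s!i" by blast
      have "?q!i = s!i" "?q!j = s!j" "?q!(Suc l) = s!l" "?q!t = Suc n" using h qn by auto
      moreover have "s!i \<le> n" using perms_elems[OF s, of i] h t len by auto
      moreover have "Suc l < length ?q" using ql h by simp
      moreover have "t < Suc l" using h by simp
      ultimately show False using A h unfolding Bok_def
        by (metis le_imp_less_Suc)
    qed
    ultimately show "Bok s \<and> \<not>(\<exists>i j l. i<j \<and> j<t \<and> t\<le>l \<and> l<n \<and> s!j<s!i \<and> s!l<s!i)" by blast
  next
    assume B: "Bok s \<and> \<not>(\<exists>i j l. i<j \<and> j<t \<and> t\<le>l \<and> l<n \<and> s!j<s!i \<and> s!l<s!i)"
    show "Bok ?q" unfolding Bok_def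
    proof
      assume "\<exists>i j k l. i<j \<and> j<k \<and> k<l \<and> l<length ?q \<and> ?q!j < ?q!i \<and> ?q!l < ?q!i \<and> ?q!i < ?q!k"
      then obtain i j k l where h: "i<j" "j<k" "k<l" "l<length ?q" "?q!j < ?q!i" "?q!l < ?q!i" "?q!i < ?q!k" by blast
      have "i < Suc n" "j < Suc n" "k < Suc n" "l < Suc n" using h ql by auto
      hence "?q!i \<le> Suc n" "?q!j \<le> Suc n" "?q!k \<le> Suc n" "?q!l \<le> Suc n" using qle by auto
      hence "i \<noteq> t" "j \<noteq> t" "l \<noteq> t" using h qn by auto
      then consider "k = t" | "k \<noteq> t" by blast
      then show False
      proof cases
        case 1
        have "i < t" "j < t" using h 1 by auto
        hence "s!j < s!i" using h qn by auto
        moreover have "s!(l-1) < s!i" "t \<le> l - 1" "l - 1 < n" using h qn 1 \<open>i<t\<close> ql by auto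
        ultimately show False using B \<open>i < t\<close> \<open>j < t\<close> h by blast
      next
        case 2
        have "g i < g j" "g j < g k" "g k < g l" "g l < length s"
          using gm gl h 2 \<open>i \<noteq> t\<close> \<open>j \<noteq> t\<close> \<open>l \<noteq> t\<close> ql len by auto
        moreover have "s!(g j) < s!(g i)" "s!(g l) < s!(g i)" "s!(g i) < s!(g k)"
          using h gv 2 \<open>i \<noteq> t\<close> \<open>j \<noteq> t\<close> \<open>l \<noteq> t\<close> by auto
        ultimately show False using B unfolding Bok_def by blast
      qed
    qed
  qed
qed



definition lrm :: "nat list \<Rightarrow> nat \<Rightarrow> bool" where
  "lrm s i \<longleftrightarrow> i < length s \<and> (\<forall>j<i. s!j < s!i)"
definition lrmin :: "nat list \<Rightarrow> nat \<Rightarrow> bool" where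
  "lrmin s i \<longleftrightarrow> i < length s \<and> (\<forall>j<i. s!j > s!i)"
definition irun :: "nat list \<Rightarrow> nat \<Rightarrow> bool" where
  "irun s i \<longleftrightarrow> i < length s \<and> (\<forall>j<i. s!j < s!(Suc j))"

lemma Lrmax_lrm: "Lrmax s = {s!i | i. lrm s i}"
  unfolding Lrmax_def lrm_def by blast
lemma Lrmin_lrmin: "Lrmin s = {s!i | i. lrmin s i}"
  unfolding Lrmin_def lrmin_def by blast
lemma Iar_irun: "Iar s = {s!i | i. irun s i}"
  unfolding Iar_def irun_def by simp

lemma perm_facts:
  assumes "s \<in> perms n"
  shows "length s = n" "distinct s" "\<And>i. i < n \<Longrightarrow> 1 \<le> s!i" "\<And>i. i < n \<Longrightarrow> s!i \<le> n"
  using assms perms_len perms_elems unfolding perms_def by auto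

lemma perm_inj: "s \<in> perms n \<Longrightarrow> i < n \<Longrightarrow> j < n \<Longrightarrow> s!i = s!j \<Longrightarrow> i = j"
  using perm_facts nth_eq_iff_index_eq by metis

lemma ins_q:
  assumes s: "s \<in> perms n" and t: "t \<le> n"
  shows "length (ins (Suc n) s t) = Suc n"
    "\<And>i. i < t \<Longrightarrow> ins (Suc n) s t ! i = s!i"
    "ins (Suc n) s t ! t = Suc n"
    "\<And>i. t \<le> i \<Longrightarrow> ins (Suc n) s t ! (Suc i) = s!i"
  using ins_nth'[OF s t] perm_facts[OF s] t by auto

lemma pos_nth: "distinct xs \<Longrightarrow> i < length xs \<Longrightarrow> pos xs (xs!i) = i"
  unfolding pos_def
  by (rule Least_equality) (auto simp: nth_eq_iff_index_eq)

lemma lrm_mono: "lrm s i \<Longrightarrow> lrm s j \<Longrightarrow> i < j \<Longrightarrow> s!i < s!j"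
  unfolding lrm_def by auto

lemma lrm_mono_rev: "lrm s i \<Longrightarrow> lrm s j \<Longrightarrow> s!i < s!j \<Longrightarrow> i < j"
  unfolding lrm_def by (metis linorder_neqE_nat order_less_asym)

lemma ins_lrm:
  assumes s: "s \<in> perms n" and t: "t \<le> n"
  shows "lrm (ins (Suc n) s t) i \<longleftrightarrow> (i < t \<and> lrm s i) \<or> i = t"
proof -
  note q = ins_q[OF s t]
  note pf = perm_facts[OF s]
  consider "i < t" | "i = t" | "t < i" by linarith
  then show ?thesis
  proof cases
    case 1
    have e: "\<And>j. j \<le> i \<Longrightarrow> ins (Suc n) s t ! j = s!j" using q(2) 1 by simp
    have "i < n" "i < Suc n" using 1 t by auto
    then show ?thesis unfolding lrm_def using e 1 q(1) pf(1) by simp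
  next
    case 2
    have e: "\<And>j. j < i \<Longrightarrow> ins (Suc n) s t ! j < Suc n" using q(2) 2 pf t
      by (metis le_imp_less_Suc order_less_le_trans)
    have "lrm (ins (Suc n) s t) i" unfolding lrm_def using q(1,3) t 2 e by auto
    then show ?thesis using 2 by blast
  next
    case 3
    then obtain i' where i': "i = Suc i'" "t \<le> i'" by (cases i) auto
    show ?thesis
    proof (cases "i < Suc n")
      case True
      hence "ins (Suc n) s t ! i \<le> n" using q pf i' by auto
      moreover have "ins (Suc n) s t ! t = Suc n" using q by auto
      ultimately show ?thesis unfolding lrm_def using 3 by force
    next
      case False then show ?thesis unfolding lrm_def using q 3 by auto
    qed
  qed
qed

lemma ins_Lrmax:
  assumes s: "s \<in> perms n" and t: "t \<le> n"
  shows "Lrmax (ins (Suc n) s t) = insert (Suc n) {s!i | i. i < t \<and> lrm s i}"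
proof -
  note q = ins_q[OF s t]
  show ?thesis unfolding Lrmax_lrm ins_lrm[OF s t]
  proof (rule set_eqI, rule iffI)
    fix x assume "x \<in> {ins (Suc n) s t ! i |i. i < t \<and> lrm s i \<or> i = t}"
    then obtain i where "x = ins (Suc n) s t ! i" "i < t \<and> lrm s i \<or> i = t" by blast
    then show "x \<in> insert (Suc n) {s ! i |i. i < t \<and> lrm s i}" using q by auto
  next
    fix x assume "x \<in> insert (Suc n) {s ! i |i. i < t \<and> lrm s i}"
    then consider "x = Suc n" | i where "x = s!i" "i < t" "lrm s i" by blast
    then show "x \<in> {ins (Suc n) s t ! i |i. i < t \<and> lrm s i \<or> i = t}"
    proof cases
      case 1 then show ?thesis using q(3) by (metis (mono_tags, lifting) mem_Collect_eq)
    next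
      case 2 then show ?thesis using q(2)[of i] by (metis (mono_tags, lifting) mem_Collect_eq)
    qed
  qed
qed

lemma ins_lrmin:
  assumes s: "s \<in> perms n" and t: "t \<le> n"
  shows "lrmin (ins (Suc n) s t) i \<longleftrightarrow> (i < t \<and> lrmin s i) \<or> (i = t \<and> t = 0) \<or> (\<exists>i'. i = Suc i' \<and> t \<le> i' \<and> lrmin s i')"
proof -
  note q = ins_q[OF s t]
  note pf = perm_facts[OF s]
  consider "i < t" | "i = t" | "t < i" by linarith
  then show ?thesis
  proof cases
    case 1
    then show ?thesis unfolding lrmin_def using q pf t by auto
  next
    case 2
    show ?thesis
    proof (cases "t = 0")
      case True then show ?thesis using 2 q unfolding lrmin_def by auto
    next
      case False
      hence "ins (Suc n) s t ! 0 = s!0" "s!0 \<le> n" using q pf t by auto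
      then show ?thesis using 2 False q unfolding lrmin_def by auto
    qed
  next
    case 3
    then obtain i' where i': "i = Suc i'" "t \<le> i'" by (cases i) auto
    have A: "lrmin (ins (Suc n) s t) i \<longleftrightarrow> lrmin s i'"
    proof -
      have "(\<forall>j<i. ins (Suc n) s t ! j > ins (Suc n) s t ! i) \<longleftrightarrow> (\<forall>j<i'. s!j > s!i')"
        if "i' < n"
      proof
        assume h: "\<forall>j<i. ins (Suc n) s t ! j > ins (Suc n) s t ! i"
        show "\<forall>j<i'. s!j > s!i'"
        proof (intro allI impI)
          fix j assume "j < i'"
          show "s!j > s!i'"
          proof (cases "j < t")
            case True then show ?thesis using h[rule_format, of j] q(2)[of j] q(4)[of i'] i' \<open>j<i'\<close> by simp
          next
            case False
            hence "ins (Suc n) s t ! Suc j = s!j" using q by auto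
            then show ?thesis using h[rule_format, of "Suc j"] q(4)[of i'] i' \<open>j<i'\<close> by simp
          qed
        qed
      next
        assume h: "\<forall>j<i'. s!j > s!i'"
        show "\<forall>j<i. ins (Suc n) s t ! j > ins (Suc n) s t ! i"
        proof (intro allI impI)
          fix j assume "j < i"
          consider "j < t" | "j = t" | "t < j" by linarith
          then show "ins (Suc n) s t ! j > ins (Suc n) s t ! i"
          proof cases
            case 1 then show ?thesis using h q i' \<open>j<i\<close> by auto
          next
            case 2 then show ?thesis using q i' pf that by (simp add: le_imp_less_Suc)
          next
            case 3
            then obtain j' where "j = Suc j'" "t \<le> j'" by (cases j) auto
            then show ?thesis using h q i' \<open>j<i\<close> by auto
          qed
        qed
      qed
      moreover have "i < length (ins (Suc n) s t) \<longleftrightarrow> i' < length s" using q pf i' by auto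
      ultimately show ?thesis unfolding lrmin_def using pf by auto
    qed
    show ?thesis using A i' 3 by auto
  qed
qed

lemma setcomp_image: "{f i | i. P i} = f ` {i. P i}" by auto

lemma ins_Lrmin:
  assumes s: "s \<in> perms n" and t: "t \<le> n"
  shows "Lrmin (ins (Suc n) s t) = Lrmin s \<union> (if t = 0 then {Suc n} else {})"
proof -
  note q = ins_q[OF s t]
  let ?q = "ins (Suc n) s t"
  have I: "{i. lrmin ?q i} = {i. i<t \<and> lrmin s i} \<union> (if t=0 then {t} else {}) \<union> Suc ` {i. t \<le> i \<and> lrmin s i}"
    using ins_lrmin[OF s t] by auto
  have "(\<lambda>i. ?q!i) ` {i. lrmin ?q i} = (\<lambda>i. s!i) ` {i. i<t \<and> lrmin s i} \<union> (if t = 0 then {Suc n} else {})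
      \<union> (\<lambda>i. s!i) ` {i. t \<le> i \<and> lrmin s i}"
    unfolding I image_Un image_image using q by (auto simp: image_iff)
  also have "\<dots> = (\<lambda>i. s!i) ` {i. lrmin s i} \<union> (if t = 0 then {Suc n} else {})"
    by (auto simp: image_iff) (metis not_le)
  finally show ?thesis unfolding Lrmin_lrmin setcomp_image .
qed


lemma ins_irun:
  assumes s: "s \<in> perms n" and t: "t \<le> n"
  shows "irun (ins (Suc n) s t) i \<longleftrightarrow> (i < t \<and> irun s i) \<or> (i = t \<and> (\<forall>j. Suc j < t \<longrightarrow> s!j < s!(Suc j)))"
proof -
  note q = ins_q[OF s t]
  note pf = perm_facts[OF s]
  let ?q = "ins (Suc n) s t"
  consider "i < t" | "i = t" | "t < i" by linarith
  then show ?thesis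
  proof cases
    case 1
    have e: "\<And>j. j \<le> i \<Longrightarrow> ?q ! j = s!j" using q(2) 1 by simp
    have e2: "\<And>j. j < i \<Longrightarrow> ?q ! Suc j = s! Suc j" using q(2) 1 by simp
    have "i < n" "i < Suc n" using 1 t by auto
    then show ?thesis unfolding irun_def using e e2 1 q(1) pf(1) by simp
  next
    case 2
    have "(\<forall>j<t. ?q!j < ?q!(Suc j)) \<longleftrightarrow> (\<forall>j. Suc j < t \<longrightarrow> s!j < s!(Suc j))"
    proof
      assume h: "\<forall>j<t. ?q!j < ?q!(Suc j)"
      show "\<forall>j. Suc j < t \<longrightarrow> s!j < s!(Suc j)"
      proof (intro allI impI)
        fix j assume "Suc j < t"
        then show "s!j < s!(Suc j)" using h[rule_format, of j] q(2)[of j] q(2)[of "Suc j"] by simp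
      qed
    next
      assume h: "\<forall>j. Suc j < t \<longrightarrow> s!j < s!(Suc j)"
      show "\<forall>j<t. ?q!j < ?q!(Suc j)"
      proof (intro allI impI)
        fix j assume "j < t"
        show "?q!j < ?q!(Suc j)"
        proof (cases "Suc j = t")
          case True
          have "s!j \<le> n" using pf \<open>j<t\<close> t by auto
          then show ?thesis using True q(2)[of j] q(3) \<open>j<t\<close> by simp
        next
          case False
          then show ?thesis using h \<open>j<t\<close> q(2)[of j] q(2)[of "Suc j"] by simp
        qed
      qed
    qed
    moreover have "t < length ?q" using q t by simp
    ultimately show ?thesis unfolding irun_def using 2 by auto
  next
    case 3
    have "\<not> irun ?q i"
    proof
      assume "irun ?q i"
      hence "?q!t < ?q!(Suc t)" "i < Suc n" unfolding irun_def using 3 q by auto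
      moreover have "?q!(Suc t) = s!t" using q by simp
      moreover have "t < n" using 3 calculation by simp
      ultimately show False using pf q(3) by fastforce
    qed
    then show ?thesis using 3 by auto
  qed
qed

lemma set_take_nth: "t \<le> length s \<Longrightarrow> set (take t s) = (\<lambda>i. s!i) ` {i. i < t}"
  by (auto simp: set_conv_nth image_iff) (metis nth_take order_less_le_trans)+

lemma ins_Iar:
  assumes s: "s \<in> perms n" and t: "t \<le> n"
  shows "Iar (ins (Suc n) s t) = (if (\<forall>j. Suc j < t \<longrightarrow> s!j < s!(Suc j)) then insert (Suc n) (set (take t s)) else Iar s)"
proof -
  note q = ins_q[OF s t]
  note pf = perm_facts[OF s]
  let ?q = "ins (Suc n) s t"
  let ?inc = "\<forall>j. Suc j < t \<longrightarrow> s!j < s!(Suc j)"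
  have I: "{i. irun ?q i} = {i. i<t \<and> irun s i} \<union> (if ?inc then {t} else {})"
    using ins_irun[OF s t] by auto
  have "Iar ?q = (\<lambda>i. s!i) ` {i. i<t \<and> irun s i} \<union> (if ?inc then {Suc n} else {})"
    unfolding Iar_irun setcomp_image I image_Un using q by (auto simp: image_iff)
  moreover have "?inc \<Longrightarrow> {i. i<t \<and> irun s i} = {i. i < t}"
    unfolding irun_def using t pf by auto
  moreover have "\<not> ?inc \<Longrightarrow> {i. i<t \<and> irun s i} = {i. irun s i}"
  proof -
    assume "\<not> ?inc"
    then obtain j0 where j0: "Suc j0 < t" "\<not> s!j0 < s!(Suc j0)" by blast
    have "irun s i \<Longrightarrow> i < t" for i
    proof (rule ccontr)
      assume "irun s i" "\<not> i < t"
      then show False using j0 unfolding irun_def by auto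
    qed
    then show ?thesis by auto
  qed
  ultimately show ?thesis using set_take_nth[of t s] pf t unfolding Iar_irun setcomp_image by auto
qed

lemma perm_pos:
  assumes s: "s \<in> perms n" and v: "1 \<le> v" "v \<le> n"
  shows "pos s v < n" "s ! (pos s v) = v"
proof -
  have "v \<in> set s" using s v unfolding perms_def by auto
  then obtain p where p: "p < length s" "s!p = v" by (auto simp: in_set_conv_nth)
  hence "pos s v = p" using pos_nth[of s p] perm_facts[OF s] by auto
  thus "pos s v < n" "s ! (pos s v) = v" using p perm_facts[OF s] by auto
qed

lemma ins_pos:
  assumes s: "s \<in> perms n" and t: "t \<le> n"
  shows "\<And>v. 1 \<le> v \<Longrightarrow> v \<le> n \<Longrightarrow> pos (ins (Suc n) s t) v = (if pos s v < t then pos s v else Suc (pos s v))"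
    "pos (ins (Suc n) s t) (Suc n) = t"
proof -
  note q = ins_q[OF s t]
  have dq: "distinct (ins (Suc n) s t)" using ins_perms[OF s] unfolding perms_def by auto
  show "pos (ins (Suc n) s t) (Suc n) = t" using pos_nth[OF dq, of t] q t by simp
  fix v assume v: "1 \<le> v" "v \<le> n"
  note pp = perm_pos[OF s v]
  show "pos (ins (Suc n) s t) v = (if pos s v < t then pos s v else Suc (pos s v))"
  proof (cases "pos s v < t")
    case True
    then show ?thesis using pos_nth[OF dq, of "pos s v"] q pp t by simp
  next
    case False
    then show ?thesis using pos_nth[OF dq, of "Suc (pos s v)"] q pp t by simp
  qed
qed

lemma Ides_sub: "s \<in> perms n \<Longrightarrow> x \<in> Ides s \<Longrightarrow> 1 \<le> x \<and> x < n"
  unfolding Ides_def using perm_facts by fastforce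

lemma ins_Ides:
  assumes s: "s \<in> perms n" and t: "t \<le> n" and n: "1 \<le> n"
  shows "Ides (ins (Suc n) s t) = Ides s \<union> (if t \<le> pos s n then {n} else {})"
proof -
  note q = ins_q[OF s t]
  note pf = perm_facts[OF s]
  let ?q = "ins (Suc n) s t"
  define f where "f = (\<lambda>x::nat. if x < t then x else Suc x)"
  have fm: "\<And>x y. f x < f y \<longleftrightarrow> x < y" unfolding f_def by auto
  have pq: "\<And>v. 1 \<le> v \<Longrightarrow> v \<le> n \<Longrightarrow> pos ?q v = f (pos s v)" using ins_pos[OF s t] unfolding f_def by auto
  show ?thesis
  proof (rule set_eqI)
    fix i
    show "i \<in> Ides ?q \<longleftrightarrow> i \<in> Ides s \<union> (if t \<le> pos s n then {n} else {})"
    proof (cases "1 \<le> i \<and> i < n")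
      case True
      have "pos ?q i = f (pos s i)" "pos ?q (Suc i) = f (pos s (Suc i))" using pq True by auto
      then show ?thesis unfolding Ides_def using True fm q pf by auto
    next
      case False
      show ?thesis
      proof (cases "i = n")
        case True
        have "pos ?q n = f (pos s n)" using pq n by auto
        moreover have "pos ?q (Suc n) = t" using ins_pos[OF s t] by simp
        ultimately have "i \<in> Ides ?q \<longleftrightarrow> t < f (pos s n)" unfolding Ides_def using True q n by auto
        also have "\<dots> \<longleftrightarrow> t \<le> pos s n" unfolding f_def by auto
        finally show ?thesis using True Ides_sub[OF s, of n] by auto
      next
        case F2: False
        have "i \<notin> Ides ?q" unfolding Ides_def using False F2 q by auto
        moreover have "i \<notin> Ides s" using Ides_sub[OF s, of i] False by auto
        ultimately show ?thesis using F2 by auto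
      qed
    qed
  qed
qed

lemma ent_R: "ent s (int i + 1) = (if Suc i < length s then s!(Suc i) else 0)"
proof -
  have "nat (int i + 1) = Suc i" by (metis Suc_as_int nat_int)
  thus ?thesis unfolding ent_def by auto
qed
lemma ent_L: "i < length s \<Longrightarrow> ent s (int i - 1) = (if i = 0 then 0 else s!(i-1))"
  unfolding ent_def by (auto simp: nat_diff_distrib)

lemma Br_pos:
  assumes s: "s \<in> perms n"
  shows "Br s = {s!i | i. lrm s i \<and> (Suc i < length s \<longrightarrow> s!(Suc i) < s!i)}"
proof -
  note pf = perm_facts[OF s]
  have pk: "\<And>i. lrm s i \<Longrightarrow> s!i \<in> Pk s \<longleftrightarrow> (Suc i < length s \<longrightarrow> s!(Suc i) < s!i)"
  proof -
    fix i assume l: "lrm s i"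
    hence il: "i < length s" unfolding lrm_def by simp
    have L: "ent s (int i - 1) < s!i"
    proof (cases "i = 0")
      case True
      have "1 \<le> s!0" using pf il True by auto
      then show ?thesis using ent_L[OF il] True by simp
    next
      case False then show ?thesis using ent_L[OF il] l unfolding lrm_def by auto
    qed
    show "s!i \<in> Pk s \<longleftrightarrow> (Suc i < length s \<longrightarrow> s!(Suc i) < s!i)"
    proof
      assume "s!i \<in> Pk s"
      then obtain i' where i': "s!i = s!i'" "i' < length s" "ent s (int i' + 1) < s!i'" unfolding Pk_def by blast
      hence "i' = i" using perm_inj[OF s] il pf by metis
      then show "Suc i < length s \<longrightarrow> s!(Suc i) < s!i" using i' ent_R by auto
    next
      assume "Suc i < length s \<longrightarrow> s!(Suc i) < s!i"
      moreover have "1 \<le> s!i" using pf il by auto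
      ultimately have "ent s (int i + 1) < s!i" using ent_R[of s i] by auto
      then show "s!i \<in> Pk s" unfolding Pk_def using L il by blast
    qed
  qed
  show ?thesis unfolding Br_def Lrmax_lrm using pk by blast
qed

lemma ins_Br:
  assumes s: "s \<in> perms n" and t: "t \<le> n"
  shows "Br (ins (Suc n) s t) = insert (Suc n) {s!i | i. Suc i < t \<and> lrm s i \<and> s!(Suc i) < s!i}"
proof -
  note q = ins_q[OF s t]
  note pf = perm_facts[OF s]
  let ?q = "ins (Suc n) s t"
  have c: "lrm ?q i \<and> (Suc i < length ?q \<longrightarrow> ?q!(Suc i) < ?q!i) \<longleftrightarrow>
      (Suc i < t \<and> lrm s i \<and> s!(Suc i) < s!i) \<or> i = t" for i
  proof (cases "i = t")
    case True
    have "Suc t < Suc n \<Longrightarrow> ?q!(Suc t) < ?q!t" using q pf by (simp add: le_imp_less_Suc)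
    then show ?thesis using True ins_lrm[OF s t] q by auto
  next
    case False
    show ?thesis
    proof (cases "i < t")
      case True
      show ?thesis
      proof (cases "Suc i = t")
        case True
        have "?q!i < ?q!(Suc i)" using True q pf t \<open>i<t\<close> by (simp add: le_imp_less_Suc)
        then show ?thesis using True \<open>i<t\<close> q t by auto
      next
        case False
        then show ?thesis using \<open>i<t\<close> ins_lrm[OF s t] q t \<open>i \<noteq> t\<close> by auto
      qed
    next
      case False
      then show ?thesis using ins_lrm[OF s t] \<open>i \<noteq> t\<close> by auto
    qed
  qed
  have "Br ?q = (\<lambda>i. ?q!i) ` {i. (Suc i < t \<and> lrm s i \<and> s!(Suc i) < s!i) \<or> i = t}"
    unfolding Br_pos[OF ins_perms[OF s]] setcomp_image c ..
  also have "{i. (Suc i < t \<and> lrm s i \<and> s!(Suc i) < s!i) \<or> i = t} = insert t {i. Suc i < t \<and> lrm s i \<and> s!(Suc i) < s!i}"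
    by auto
  also have "(\<lambda>i. ?q!i) ` insert t {i. Suc i < t \<and> lrm s i \<and> s!(Suc i) < s!i} = insert (Suc n) ((\<lambda>i. s!i) ` {i. Suc i < t \<and> lrm s i \<and> s!(Suc i) < s!i})"
    unfolding image_insert q(3) using q(2) by (intro arg_cong[where f="insert _"] image_cong) auto
  finally show ?thesis unfolding setcomp_image .
qed



type_synonym stat = "nat set \<times> nat set \<times> nat set \<times> nat set \<times> nat set"

definition St :: "nat list \<Rightarrow> stat" where
  "St p = (Br p, Ides p, Lrmax p, Lrmin p, Iar p)"

definition cf :: "nat \<Rightarrow> stat \<Rightarrow> (nat \<times> bool) option \<Rightarrow> stat" where
  "cf n st d = (case st of (br, ides, lmx, lmn, iar) \<Rightarrow> (case d of
     None \<Rightarrow> ({Suc n}, insert n ides, {Suc n}, insert (Suc n) lmn, {Suc n})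
   | Some (l, b) \<Rightarrow> (if b then insert (Suc n) {x\<in>br. x<l} else insert (Suc n) {x\<in>br. x \<le> l},
        if l < n then insert n ides else ides,
        insert (Suc n) {x\<in>lmx. x \<le> l}, lmn,
        if b \<and> l \<in> iar then insert (Suc n) {x\<in>iar. x \<le> l} else iar)))"

definition desc :: "nat list \<Rightarrow> nat \<Rightarrow> (nat \<times> bool) option" where
  "desc s t = (if t = 0 then None else Some (Max (set (take t s)), s!(t-1) = Max (set (take t s))))"

lemma prefix_max:
  assumes s: "s \<in> perms n" and t: "1 \<le> t" "t \<le> n"
  obtains p where "p < t" "s!p = Max (set (take t s))" "lrm s p" "\<And>i. i < t \<Longrightarrow> s!i \<le> Max (set (take t s))"
proof -
  note pf = perm_facts[OF s]
  have ne: "set (take t s) \<noteq> {}" using t pf by auto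
  have ub: "\<And>i. i < t \<Longrightarrow> s!i \<le> Max (set (take t s))"
  proof -
    fix i assume i: "i < t"
    have "take t s ! i = s!i" using i by simp
    moreover have "i < length (take t s)" using i t pf by simp
    ultimately have "s!i \<in> set (take t s)" by (metis nth_mem)
    then show "s!i \<le> Max (set (take t s))" by simp
  qed
  have "Max (set (take t s)) \<in> set (take t s)" using ne by simp
  then obtain p where p: "p < t" "s!p = Max (set (take t s))" using t pf
    by (auto simp: in_set_conv_nth)
  have "lrm s p"
    unfolding lrm_def
  proof (intro conjI allI impI)
    show "p < length s" using p t pf by simp
    fix j assume "j < p"
    hence "s!j \<le> s!p" using ub p by simp
    moreover have "s!j \<noteq> s!p" using perm_inj[OF s, of j p] \<open>j<p\<close> p t pf by auto
    ultimately show "s!j < s!p" by simp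
  qed
  then show ?thesis using that p ub by blast
qed

lemma mono_run:
  fixes s :: "nat list"
  assumes h: "\<forall>j. Suc j \<le> m \<longrightarrow> s!j < s!(Suc j)"
  shows "a < b \<Longrightarrow> b \<le> m \<Longrightarrow> s!a < s!b"
proof (induction b)
  case 0 then show ?case by simp
next
  case (Suc b)
  have st: "s!b < s!(Suc b)" using h Suc.prems by blast
  show ?case
  proof (cases "a = b")
    case True then show ?thesis using st by simp
  next
    case False
    hence "s!a < s!b" using Suc by simp
    then show ?thesis using st by (rule order.strict_trans)
  qed
qed


locale pm_ctx =
  fixes s n t p l
  assumes s: "s \<in> perms n" and t1: "1 \<le> t" and tn: "t \<le> n"
    and pt: "p < t" and pl: "s!p = l" and lp: "lrm s p" and ub: "\<And>i. i < t \<Longrightarrow> s!i \<le> l"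
begin

lemma pn: "p < n" using pt tn by simp

lemma LM: "{s!i | i. i<t \<and> lrm s i} = {x \<in> Lrmax s. x \<le> l}"
proof (rule set_eqI, rule iffI)
  fix x assume "x \<in> {s!i | i. i<t \<and> lrm s i}"
  then show "x \<in> {x \<in> Lrmax s. x \<le> l}" unfolding Lrmax_lrm using ub by auto
next
  fix x assume "x \<in> {x \<in> Lrmax s. x \<le> l}"
  then obtain i where i: "x = s!i" "lrm s i" "x \<le> l" unfolding Lrmax_lrm by blast
  have "i < t"
  proof (rule ccontr)
    assume "\<not> i < t"
    hence "p < i" using pt by simp
    hence "s!p < s!i" using lrm_mono lp i by blast
    then show False using i pl by simp
  qed
  then show "x \<in> {s!i | i. i<t \<and> lrm s i}" using i by blast
qed

lemma IDES: "t \<le> pos s n \<longleftrightarrow> l < n"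
proof -
  note pf = perm_facts[OF s]
  have n1: "1 \<le> n" using t1 tn by simp
  note pp = perm_pos[OF s n1 order_refl]
  have ln: "l \<le> n" using pf pn pl by auto
  show ?thesis
  proof
    assume "t \<le> pos s n"
    hence "p \<noteq> pos s n" using pt by simp
    hence "s!p \<noteq> n" using perm_inj[OF s pn pp(1)] pp(2) by auto
    then show "l < n" using ln pl by simp
  next
    assume "l < n"
    show "t \<le> pos s n"
    proof (rule ccontr)
      assume "\<not> t \<le> pos s n"
      hence "n \<le> l" using ub[of "pos s n"] pp by simp
      then show False using \<open>l < n\<close> by simp
    qed
  qed
qed

lemma BR: "{s!i | i. Suc i < t \<and> lrm s i \<and> s!(Suc i) < s!i} =
   (if s!(t-1) = l then {x\<in>Br s. x < l} else {x\<in>Br s. x \<le> l})"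
proof -
  note pf = perm_facts[OF s]
  have Bp: "Br s = {s!i | i. lrm s i \<and> (Suc i < n \<longrightarrow> s!(Suc i) < s!i)}" using Br_pos[OF s] pf by simp
  have key: "\<And>i. lrm s i \<Longrightarrow> s!i \<le> l \<Longrightarrow> i \<le> p"
    using lrm_mono_rev lp pl by (metis le_eq_less_or_eq not_le order.asym lrm_mono)
  show ?thesis
  proof (cases "s!(t-1) = l")
    case True
    hence tp: "t - 1 = p" using perm_inj[OF s, of "t-1" p] pl pt tn pn by simp
    have "{s!i | i. Suc i < t \<and> lrm s i \<and> s!(Suc i) < s!i} = {x\<in>Br s. x < l}"
    proof (rule set_eqI, rule iffI)
      fix x assume "x \<in> {s!i | i. Suc i < t \<and> lrm s i \<and> s!(Suc i) < s!i}"
      then obtain i where i: "x = s!i" "Suc i < t" "lrm s i" "s!(Suc i) < s!i" by blast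
      have "i < p" using i tp by simp
      hence "x < l" using lrm_mono[OF i(3) lp] i pl by simp
      moreover have "x \<in> Br s" unfolding Bp using i by blast
      ultimately show "x \<in> {x\<in>Br s. x < l}" by simp
    next
      fix x assume "x \<in> {x\<in>Br s. x < l}"
      then obtain i where i: "x = s!i" "lrm s i" "Suc i < n \<longrightarrow> s!(Suc i) < s!i" "x < l" unfolding Bp by blast
      have "i < p" using lrm_mono_rev[OF i(2) lp] i pl by simp
      hence "Suc i < t" "Suc i < n" using tp pn by auto
      then show "x \<in> {s!i | i. Suc i < t \<and> lrm s i \<and> s!(Suc i) < s!i}" using i by blast
    qed
    then show ?thesis using True by simp
  next
    case False
    hence tp: "p < t - 1" using pt pl by (metis Suc_pred' less_Suc_eq order.strict_trans1 t1 less_one not_le)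
    have "{s!i | i. Suc i < t \<and> lrm s i \<and> s!(Suc i) < s!i} = {x\<in>Br s. x \<le> l}"
    proof (rule set_eqI, rule iffI)
      fix x assume "x \<in> {s!i | i. Suc i < t \<and> lrm s i \<and> s!(Suc i) < s!i}"
      then obtain i where i: "x = s!i" "Suc i < t" "lrm s i" "s!(Suc i) < s!i" by blast
      have "x \<le> l" using ub i by simp
      moreover have "x \<in> Br s" unfolding Bp using i by blast
      ultimately show "x \<in> {x\<in>Br s. x \<le> l}" by simp
    next
      fix x assume "x \<in> {x\<in>Br s. x \<le> l}"
      then obtain i where i: "x = s!i" "lrm s i" "Suc i < n \<longrightarrow> s!(Suc i) < s!i" "x \<le> l" unfolding Bp by blast
      have "i \<le> p" using key i by simp
      hence "Suc i < t" "Suc i < n" using tp tn by auto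
      then show "x \<in> {s!i | i. Suc i < t \<and> lrm s i \<and> s!(Suc i) < s!i}" using i by blast
    qed
    then show ?thesis using False by simp
  qed
qed

lemma IAR: "(if (\<forall>j. Suc j < t \<longrightarrow> s!j < s!(Suc j)) then insert (Suc n) (set (take t s)) else Iar s) =
   (if s!(t-1) = l \<and> l \<in> Iar s then insert (Suc n) {x\<in>Iar s. x \<le> l} else Iar s)"
proof -
  note pf = perm_facts[OF s]
  show ?thesis
  proof (cases "s!(t-1) = l")
    case True
    hence tp: "t - 1 = p" using perm_inj[OF s, of "t-1" p] pl pt tn pn by simp
    have I1: "(\<forall>j. Suc j < t \<longrightarrow> s!j < s!(Suc j)) \<longleftrightarrow> irun s p"
      unfolding irun_def using tp pn pf by auto
    have I2: "l \<in> Iar s \<longleftrightarrow> irun s p"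
    proof
      assume "l \<in> Iar s"
      then obtain i where i: "s!i = l" "irun s i" unfolding Iar_irun by blast
      hence "i = p" using perm_inj[OF s, of i p] pl pn unfolding irun_def using pf by auto
      then show "irun s p" using i by simp
    next
      assume "irun s p" then show "l \<in> Iar s" unfolding Iar_irun using pl by blast
    qed
    show ?thesis
    proof (cases "irun s p")
      case True
      have run: "\<forall>j. Suc j \<le> p \<longrightarrow> s!j < s!(Suc j)" using True unfolding irun_def by auto
      have "set (take t s) = {x\<in>Iar s. x \<le> l}"
      proof (rule set_eqI, rule iffI)
        fix x assume "x \<in> set (take t s)"
        then obtain i where i: "i < t" "x = s!i" using set_take_nth[of t s] tn pf by auto
        have "irun s i" unfolding irun_def using run i tp pf pn by auto
        moreover have "x \<le> l" using ub i by simp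
        ultimately show "x \<in> {x\<in>Iar s. x \<le> l}" unfolding Iar_irun using i by blast
      next
        fix x assume "x \<in> {x\<in>Iar s. x \<le> l}"
        then obtain i where i: "x = s!i" "irun s i" "x \<le> l" unfolding Iar_irun by blast
        have "i \<le> p"
        proof (rule ccontr)
          assume "\<not> i \<le> p"
          have "\<forall>j. Suc j \<le> i \<longrightarrow> s!j < s!(Suc j)" using i(2) unfolding irun_def by auto
          hence "s!p < s!i" using mono_run[of i s p i] \<open>\<not> i \<le> p\<close> by simp
          then show False using i pl by simp
        qed
        hence "i < t" using tp pt by simp
        then show "x \<in> set (take t s)" using set_take_nth[of t s] tn pf i by auto
      qed
      then show ?thesis using True I1 I2 \<open>s!(t-1) = l\<close> by simp
    next
      case False
      have "\<not> (\<forall>j. Suc j < t \<longrightarrow> s!j < s!(Suc j))" using I1 False by blast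
      moreover have "l \<notin> Iar s" using I2 False by blast
      ultimately show ?thesis by auto
    qed
  next
    case False
    hence tp: "p < t - 1" using pt pl by (metis Suc_pred' less_Suc_eq order.strict_trans1 t1 less_one not_le)
    have "\<not>(\<forall>j. Suc j < t \<longrightarrow> s!j < s!(Suc j))"
    proof
      assume "\<forall>j. Suc j < t \<longrightarrow> s!j < s!(Suc j)"
      hence "\<forall>j. Suc j \<le> t - 1 \<longrightarrow> s!j < s!(Suc j)" by auto
      hence "s!p < s!(t-1)" using mono_run[of "t-1" s p "t-1"] tp by simp
      moreover have "s!(t-1) \<le> l" using ub t1 by simp
      ultimately show False using pl by simp
    qed
    then show ?thesis using False by auto
  qed
qed

end

lemma St_ins:
  assumes s: "s \<in> perms n" and n: "1 \<le> n" and t: "t \<le> n"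
  shows "St (ins (Suc n) s t) = cf n (St s) (desc s t)"
proof (cases "t = 0")
  case True
  show ?thesis unfolding St_def cf_def desc_def
    using True ins_Br[OF s t] ins_Ides[OF s t n] ins_Lrmax[OF s t] ins_Lrmin[OF s t] ins_Iar[OF s t]
    by simp
next
  case False
  hence t1: "1 \<le> t" by simp
  obtain p where p: "p < t" "s!p = Max (set (take t s))" "lrm s p" "\<And>i. i < t \<Longrightarrow> s!i \<le> Max (set (take t s))"
    using prefix_max[OF s t1 t] by blast
  interpret pm_ctx s n t p "Max (set (take t s))"
    using s t1 t p by unfold_locales auto
  show ?thesis unfolding St_def cf_def desc_def
    using False ins_Br[OF s t] ins_Ides[OF s t n] ins_Lrmax[OF s t] ins_Lrmin[OF s t] ins_Iar[OF s t]
      LM IDES BR IAR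
    by simp
qed



definition TC :: "nat \<Rightarrow> stat \<Rightarrow> bool" where
  "TC n st = (case st of (br, ides, lmx, lmn, iar) \<Rightarrow>
     ides \<noteq> {} \<and> (\<forall>v. Max ides < v \<and> v \<le> n \<longrightarrow> v \<in> lmx) \<and> (\<forall>v. Max ides < v \<and> v < n \<longrightarrow> v \<notin> br))"

definition Dset :: "nat \<Rightarrow> stat \<Rightarrow> (nat \<times> bool) option set" where
  "Dset n st = (case st of (br, ides, lmx, lmn, iar) \<Rightarrow>
     insert None ((\<lambda>l. Some (l, True)) ` lmx \<union> (\<lambda>l. Some (l, False)) ` (br - {n})
       \<union> (if TC n st then {Some (n, False)} else {})))"

lemma TC_St: "TC n (St s) \<longleftrightarrow> Ides s \<noteq> {} \<and> (\<forall>v. Max (Ides s) < v \<and> v \<le> n \<longrightarrow> v \<in> Lrmax s)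
   \<and> (\<forall>v. Max (Ides s) < v \<and> v < n \<longrightarrow> v \<notin> Br s)"
  unfolding TC_def St_def by simp

lemma Dset_St: "Dset n (St s) = insert None ((\<lambda>l. Some (l, True)) ` Lrmax s \<union> (\<lambda>l. Some (l, False)) ` (Br s - {n})
       \<union> (if TC n (St s) then {Some (n, False)} else {}))"
  unfolding Dset_def by (simp add: St_def)

lemma lrm_pos: "s \<in> perms n \<Longrightarrow> x \<in> Lrmax s \<Longrightarrow> lrm s (pos s x) \<and> s!(pos s x) = x"
proof -
  assume s: "s \<in> perms n" "x \<in> Lrmax s"
  then obtain i where i: "x = s!i" "lrm s i" unfolding Lrmax_lrm by blast
  hence "pos s x = i" using pos_nth perm_facts[OF s(1)] unfolding lrm_def by metis
  thus ?thesis using i by simp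
qed

lemma lrm_pos_iff: "s \<in> perms n \<Longrightarrow> lrm s i \<Longrightarrow> s!i \<in> Lrmax s"
  unfolding Lrmax_lrm by blast

lemma Ides_finite: "finite (Ides s)"
  unfolding Ides_def by (rule finite_subset[of _ "{..length s}"]) auto

lemma TC_intro:
  assumes s: "s \<in> perms n" and n1: "1 \<le> n"
    and k0: "pos s n < k0" "k0 < n" and mx: "\<And>k. pos s n < k \<Longrightarrow> k < n \<Longrightarrow> s!k \<le> s!k0"
    and H: "\<And>i j. i < j \<Longrightarrow> j < pos s n \<Longrightarrow> s!k0 < s!i \<Longrightarrow> s!i < s!j"
  shows "TC n (St s)"
proof -
  note pf = perm_facts[OF s]
  define q0 where "q0 = pos s n"
  define m where "m = s!k0"
  note pn = perm_pos[OF s n1 order_refl]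
  have q0n: "q0 < n" "s!q0 = n" using pn q0_def by auto
  have m1: "1 \<le> m" "m \<le> n" using pf k0 m_def by auto
  have mn: "m < n"
  proof -
    have "m \<noteq> n" using perm_inj[OF s, of k0 q0] q0n k0 m_def q0_def by auto
    thus ?thesis using m1 by simp
  qed
  have posm: "pos s m = k0" using pos_nth[of s k0] pf k0 m_def by simp
  have above: "\<And>v. m < v \<Longrightarrow> v \<le> n \<Longrightarrow> pos s v \<le> q0"
  proof -
    fix v assume v: "m < v" "v \<le> n"
    note pv = perm_pos[OF s _ v(2)]
    have "1 \<le> v" using v m1 by simp
    show "pos s v \<le> q0"
    proof (rule ccontr)
      assume "\<not> pos s v \<le> q0"
      hence "s!(pos s v) \<le> m" using mx[of "pos s v"] pv \<open>1 \<le> v\<close> q0_def m_def by simp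
      then show False using pv \<open>1 \<le> v\<close> v by simp
    qed
  qed
  have belowq: "\<And>v. m < v \<Longrightarrow> v < n \<Longrightarrow> pos s v < q0"
  proof -
    fix v assume v: "m < v" "v < n"
    have "pos s v \<le> q0" using above v by simp
    moreover have "pos s v \<noteq> q0" using perm_pos[OF s, of v] q0n v m1 by auto
    ultimately show "pos s v < q0" by simp
  qed
  have mI: "m \<in> Ides s"
  proof -
    have "pos s (Suc m) < pos s m"
    proof (cases "Suc m = n")
      case True then show ?thesis using posm k0 q0_def by simp
    next
      case False
      hence "pos s (Suc m) < q0" using belowq[of "Suc m"] mn by simp
      then show ?thesis using posm k0 q0_def by simp
    qed
    thus ?thesis unfolding Ides_def using m1 mn pf by auto
  qed
  have Iub: "\<And>i. i \<in> Ides s \<Longrightarrow> i \<le> m"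
  proof (rule ccontr)
    fix i assume i: "i \<in> Ides s" "\<not> i \<le> m"
    have i1: "1 \<le> i" "i < n" using Ides_sub[OF s i(1)] by auto
    have gt: "pos s (Suc i) < pos s i" using i unfolding Ides_def by simp
    have pi: "pos s i < q0" using belowq[of i] i i1 by simp
    show False
    proof (cases "Suc i = n")
      case True then show False using gt pi q0_def by simp
    next
      case False
      hence "pos s (Suc i) < q0" using belowq[of "Suc i"] i i1 by simp
      have "s!(pos s (Suc i)) < s!(pos s i)"
        using H[of "pos s (Suc i)" "pos s i"] gt pi q0_def perm_pos[OF s, of "Suc i"] i i1 False m_def by simp
      then show False using perm_pos[OF s, of i] perm_pos[OF s, of "Suc i"] i1 False by simp
    qed
  qed
  have Mx: "Max (Ides s) = m" using mI Iub Ides_finite by (meson Max_eqI)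
  have L: "\<And>v. m < v \<Longrightarrow> v \<le> n \<Longrightarrow> lrm s (pos s v)"
  proof -
    fix v assume v: "m < v" "v \<le> n"
    have v1: "1 \<le> v" using v m1 by simp
    note pv = perm_pos[OF s v1 v(2)]
    show "lrm s (pos s v)" unfolding lrm_def
    proof (intro conjI allI impI)
      show "pos s v < length s" using pv pf by simp
      fix j assume j: "j < pos s v"
      have jn: "j < n" using j pv by simp
      have ne: "s!j \<noteq> v" using perm_inj[OF s jn pv(1)] pv j by auto
      show "s!j < s!(pos s v)"
      proof (rule ccontr)
        assume "\<not> s!j < s!(pos s v)"
        hence gt: "v < s!j" using ne pv by simp
        show False
        proof (cases "v = n")
          case True then show False using gt pf jn by fastforce
        next
          case False
          hence "pos s v < q0" using belowq v by simp
          hence "s!j < s!(pos s v)" using H[of j "pos s v"] j gt v q0_def m_def by simp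
          then show False using \<open>\<not> s!j < s!(pos s v)\<close> by simp
        qed
      qed
    qed
  qed
  have LM: "\<And>v. m < v \<Longrightarrow> v \<le> n \<Longrightarrow> v \<in> Lrmax s"
    using L perm_pos[OF s] m1 lrm_pos_iff[OF s] by (metis le_trans less_imp_le_nat)
  have NB: "\<And>v. m < v \<Longrightarrow> v < n \<Longrightarrow> v \<notin> Br s"
  proof
    fix v assume v: "m < v" "v < n" "v \<in> Br s"
    have v1: "1 \<le> v" using v m1 by simp
    note pv = perm_pos[OF s v1 less_imp_le[OF v(2)]]
    obtain i where i: "v = s!i" "lrm s i" "Suc i < length s \<longrightarrow> s!(Suc i) < s!i"
      using v(3) unfolding Br_pos[OF s] by blast
    have "i = pos s v" using pos_nth[of s i] pf i unfolding lrm_def by metis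
    hence iq: "i < q0" using belowq v by simp
    hence sl: "Suc i < length s" using q0n pf by simp
    have "v < s!(Suc i)"
    proof (cases "Suc i = q0")
      case True then show ?thesis using q0n v by simp
    next
      case False
      hence "Suc i < q0" using iq by simp
      then show ?thesis using H[of i "Suc i"] i v q0_def m_def by simp
    qed
    then show False using i sl by simp
  qed
  show ?thesis unfolding TC_St Mx using mI LM NB by blast
qed


locale tc_ctx =
  fixes s n
  assumes s: "s \<in> perms n" and n1: "1 \<le> n" and tc: "TC n (St s)"
begin

definition m where "m = Max (Ides s)"

lemma m_props: "m \<in> Ides s" "1 \<le> m" "m < n"
  "\<And>v. m < v \<Longrightarrow> v \<le> n \<Longrightarrow> v \<in> Lrmax s" "\<And>v. m < v \<Longrightarrow> v < n \<Longrightarrow> v \<notin> Br s"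
proof -
  have ne: "Ides s \<noteq> {}" using tc unfolding TC_St by simp
  show mi: "m \<in> Ides s" unfolding m_def using ne Ides_finite by simp
  show "1 \<le> m" "m < n" using Ides_sub[OF s mi] by auto
  show "\<And>v. m < v \<Longrightarrow> v \<le> n \<Longrightarrow> v \<in> Lrmax s" "\<And>v. m < v \<Longrightarrow> v < n \<Longrightarrow> v \<notin> Br s"
    using tc unfolding TC_St m_def by auto
qed

lemma step: "m < v \<Longrightarrow> v < n \<Longrightarrow> Suc (pos s v) < n \<and> s!(Suc (pos s v)) = Suc v"
proof -
  assume v: "m < v" "v < n"
  note pf = perm_facts[OF s]
  have vL: "v \<in> Lrmax s" using m_props v by simp
  note lv = lrm_pos[OF s vL]
  define i where "i = pos s v"
  have nb: "v \<notin> Br s" using m_props v by simp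
  have "(Suc i < length s \<longrightarrow> s!(Suc i) < s!i) \<Longrightarrow> v \<in> Br s"
    unfolding Br_pos[OF s] by (rule CollectI, rule exI[of _ i]) (use lv i_def in auto)
  hence "\<not> (Suc i < length s \<longrightarrow> s!(Suc i) < s!i)" using nb by blast
  hence si: "Suc i < n" "\<not> s!(Suc i) < v" using lv i_def pf by auto
  have "s!(Suc i) \<noteq> v" using perm_inj[OF s, of "Suc i" i] si lv i_def by auto
  hence rv: "v < s!(Suc i)" using si by simp
  have lr: "lrm s (Suc i)" unfolding lrm_def
  proof (intro conjI allI impI)
    show "Suc i < length s" using si pf by simp
    fix j assume "j < Suc i"
    then consider "j < i" | "j = i" by linarith
    then show "s!j < s!(Suc i)"
    proof cases
      case 1 then show ?thesis using lv i_def rv unfolding lrm_def by (metis order.strict_trans)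
    next
      case 2 then show ?thesis using lv i_def rv by simp
    qed
  qed
  have sL: "Suc v \<in> Lrmax s" using m_props v by simp
  note lsv = lrm_pos[OF s sL]
  have "s!(Suc i) = Suc v"
  proof (rule ccontr)
    assume "s!(Suc i) \<noteq> Suc v"
    hence "Suc v < s!(Suc i)" using rv by simp
    hence "pos s (Suc v) < Suc i" using lrm_mono_rev[OF lsv[THEN conjunct1] lr] lsv by simp
    moreover have "i < pos s (Suc v)" using lrm_mono_rev[OF lv[THEN conjunct1] lsv[THEN conjunct1]] lv lsv i_def by simp
    ultimately show False by simp
  qed
  then show ?thesis using si i_def by simp
qed

lemma run: "m < v \<Longrightarrow> v + d \<le> n \<Longrightarrow> pos s v + d < n \<and> s!(pos s v + d) = v + d"
proof (induction d)
  case 0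
  then show ?case using perm_pos[OF s, of v] m_props by simp
next
  case (Suc d)
  hence ih: "pos s v + d < n" "s!(pos s v + d) = v + d" by auto
  have "m < v + d" "v + d < n" using Suc.prems by auto
  hence st: "Suc (pos s (v+d)) < n \<and> s!(Suc (pos s (v+d))) = Suc (v + d)" using step by blast
  have "pos s (v+d) = pos s v + d" using pos_nth[of s "pos s v + d"] ih perm_facts[OF s] by simp
  then show ?case using st by simp
qed

lemma pos_run: "m < v \<Longrightarrow> v \<le> n \<Longrightarrow> pos s n = pos s v + (n - v)"
proof -
  assume v: "m < v" "v \<le> n"
  have "pos s v + (n - v) < n \<and> s!(pos s v + (n-v)) = n" using run[of v "n - v"] v by simp
  thus ?thesis using pos_nth[of s "pos s v + (n - v)"] perm_facts[OF s] by simp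
qed

lemma run_val: "m < v \<Longrightarrow> v \<le> n \<Longrightarrow> pos s v \<le> j \<Longrightarrow> j \<le> pos s n \<Longrightarrow> v \<le> s!j"
proof -
  assume v: "m < v" "v \<le> n" "pos s v \<le> j" "j \<le> pos s n"
  define d where "d = j - pos s v"
  have "v + d \<le> n" using pos_run[OF v(1,2)] v d_def by simp
  hence "s!(pos s v + d) = v + d" using run[OF v(1)] by blast
  thus ?thesis using d_def v by simp
qed

lemma posm: "pos s n < pos s m"
proof (rule ccontr)
  assume "\<not> pos s n < pos s m"
  hence le: "pos s m \<le> pos s n" by simp
  have mi: "m \<in> Ides s" using m_props by simp
  hence lt: "pos s (Suc m) < pos s m" unfolding Ides_def by simp
  have "Suc m \<le> s!(pos s m)" using run_val[of "Suc m" "pos s m"] lt le m_props by simp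
  moreover have "s!(pos s m) = m" using perm_pos[OF s, of m] m_props by simp
  ultimately show False by simp
qed

lemma posn_lt: "Suc (pos s n) < n"
proof -
  have "pos s m < n" using perm_pos[OF s, of m] m_props by simp
  moreover have "pos s m \<noteq> Suc (pos s n) \<or> Suc (pos s n) < n" using posm calculation by simp
  ultimately show ?thesis using posm by linarith
qed

end


lemma desc_eq:
  assumes s: "s \<in> perms n" and pt: "p < t" and tn: "t \<le> n" and ub: "\<And>i. i < t \<Longrightarrow> s!i \<le> s!p"
  shows "desc s t = Some (s!p, s!(t-1) = s!p)"
proof -
  note pf = perm_facts[OF s]
  have st: "set (take t s) = (\<lambda>i. s!i) ` {i. i < t}" using set_take_nth[of t s] tn pf by simp
  have "Max (set (take t s)) = s!p"
    unfolding st by (rule Max_eqI) (use pt ub in auto)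
  thus ?thesis unfolding desc_def using pt by simp
qed

lemma desc_H: "s \<in> perms n \<Longrightarrow> lrm s p \<Longrightarrow> desc s (Suc p) = Some (s!p, True)"
proof -
  assume s: "s \<in> perms n" and l: "lrm s p"
  have "p < n" using l perm_facts[OF s] unfolding lrm_def by simp
  moreover have "\<And>i. i < Suc p \<Longrightarrow> s!i \<le> s!p" using l unfolding lrm_def by (metis less_Suc_eq nless_le order.strict_implies_order order_refl)
  ultimately show ?thesis using desc_eq[OF s, of p "Suc p"] by simp
qed

lemma desc_general:
  assumes s: "s \<in> perms n" and t: "1 \<le> t" "t \<le> n" and d: "desc s t = Some (l, b)"
  shows "b \<Longrightarrow> l \<in> Lrmax s" "\<not> b \<Longrightarrow> l \<in> Br s"
proof -
  obtain p where p: "p < t" "s!p = Max (set (take t s))" "lrm s p" "\<And>i. i < t \<Longrightarrow> s!i \<le> Max (set (take t s))"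
    using prefix_max[OF s t] by blast
  have l: "l = s!p" "b = (s!(t-1) = s!p)" using d p t unfolding desc_def by auto
  show "b \<Longrightarrow> l \<in> Lrmax s" using l(1) lrm_pos_iff[OF s p(3)] by simp
  assume nb: "\<not> b"
  hence "t - 1 \<noteq> p" using l by auto
  hence sp: "Suc p < t" using p by simp
  hence "s!(Suc p) \<le> s!p" using p by simp
  moreover have "s!(Suc p) \<noteq> s!p" using perm_inj[OF s, of "Suc p" p] sp t by auto
  ultimately have lt: "s!(Suc p) < s!p" by simp
  show "l \<in> Br s" unfolding Br_pos[OF s]
    apply (rule CollectI, rule exI[of _ p]) using lt l p by auto
qed

lemma desc_some_pos:
  assumes s: "s \<in> perms n" and t: "1 \<le> t" "t \<le> n"
  shows "\<exists>l b. desc s t = Some (l, b)"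
  using t unfolding desc_def by auto

lemma desc_None_iff: "desc s t = None \<longleftrightarrow> t = 0"
  unfolding desc_def by auto

lemma desc_True_inj:
  assumes s: "s \<in> perms n" and t: "1 \<le> t" "t \<le> n" "1 \<le> t'" "t' \<le> n"
    and d: "desc s t = Some (l, True)" "desc s t' = Some (l, True)"
  shows "t = t'"
proof -
  have "s!(t-1) = l" "s!(t'-1) = l" using d t unfolding desc_def by (auto split: if_splits)
  hence "t - 1 = t' - 1" using perm_inj[OF s, of "t-1" "t'-1"] t by simp
  thus ?thesis using t by simp
qed

lemma lrm_le_posn:
  assumes s: "s \<in> perms n" and n1: "1 \<le> n" and l: "lrm s p"
  shows "p \<le> pos s n" "s!p < n \<Longrightarrow> p < pos s n"
proof -
  note pp = perm_pos[OF s n1 order_refl]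
  have ln: "lrm s (pos s n)" unfolding lrm_def
  proof (intro conjI allI impI)
    show "pos s n < length s" using pp perm_facts[OF s] by simp
    fix j assume "j < pos s n"
    hence "s!j \<le> n" "s!j \<noteq> n" using perm_facts[OF s] pp perm_inj[OF s, of j "pos s n"] by auto
    thus "s!j < s!(pos s n)" using pp by simp
  qed
  have pn: "p < n" using l perm_facts[OF s] unfolding lrm_def by simp
  show "s!p < n \<Longrightarrow> p < pos s n" using lrm_mono_rev[OF l ln] pp by simp
  show "p \<le> pos s n"
  proof (cases "s!p < n")
    case True then show ?thesis using lrm_mono_rev[OF l ln] pp by simp
  next
    case False
    hence "s!p = n" using perm_facts[OF s] pn by (metis le_neq_implies_less)
    hence "p = pos s n" using perm_inj[OF s pn pp(1)] pp by simp
    thus ?thesis by simp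
  qed
qed



lemma exists_argmax:
  fixes f :: "nat \<Rightarrow> nat"
  shows "a < b \<Longrightarrow> \<exists>k0. a \<le> k0 \<and> k0 < b \<and> (\<forall>k. a \<le> k \<and> k < b \<longrightarrow> f k \<le> f k0)"
proof (induction b)
  case 0 then show ?case by simp
next
  case (Suc b)
  show ?case
  proof (cases "a < b")
    case True
    then obtain k0 where k0: "a \<le> k0" "k0 < b" "\<forall>k. a \<le> k \<and> k < b \<longrightarrow> f k \<le> f k0" using Suc by blast
    show ?thesis
    proof (cases "f b \<le> f k0")
      case True then show ?thesis using k0 by (intro exI[of _ k0]) (auto simp: less_Suc_eq)
    next
      case False then show ?thesis using k0 True by (intro exI[of _ b]) (auto simp: less_Suc_eq)
    qed
  next
    case False
    hence "a = b" using Suc by simp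
    then show ?thesis by (intro exI[of _ b]) (auto simp: less_Suc_eq)
  qed
qed

definition okA :: "nat list \<Rightarrow> nat \<Rightarrow> bool" where
  "okA s t \<longleftrightarrow> \<not>(\<exists>i j k. i<j \<and> j<k \<and> k<t \<and> s!j<s!i \<and> s!k<s!i)"

locale A_ctx =
  fixes s n
  assumes s: "s \<in> perms n" and n1: "1 \<le> n" and A: "Aok s"
begin

lemma pn: "pos s n < n" "s!(pos s n) = n" using perm_pos[OF s n1 order_refl] by auto

lemma A0: "t \<le> Suc (pos s n) \<Longrightarrow> okA s t"
  unfolding okA_def
proof
  assume t: "t \<le> Suc (pos s n)" and "\<exists>i j k. i<j \<and> j<k \<and> k<t \<and> s!j<s!i \<and> s!k<s!i"
  then obtain i j k where h: "i<j" "j<k" "k<t" "s!j<s!i" "s!k<s!i" by blast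
  note pf = perm_facts[OF s]
  have kn: "k \<le> pos s n" using h t by simp
  have "s!i \<le> n" using pf h kn pn by simp
  hence "k \<noteq> pos s n" using h pn by auto
  hence kl: "k < pos s n" using kn by simp
  have "s!i \<noteq> n" using perm_inj[OF s, of i "pos s n"] pn h kl by auto
  hence "s!i < s!(pos s n)" using \<open>s!i \<le> n\<close> pn by simp
  then show False using A h kl pn pf unfolding Aok_def by blast
qed

lemma A3:
  assumes t: "1 \<le> t" "t \<le> n" and ok: "okA s t" and d: "desc s t = Some (l, False)"
  shows "2 \<le> t \<and> s!(t-2) = l"
proof -
  obtain p where p: "p < t" "s!p = Max (set (take t s))" "lrm s p" "\<And>i. i < t \<Longrightarrow> s!i \<le> Max (set (take t s))"
    using prefix_max[OF s t] by blast
  have l: "l = s!p" "s!(t-1) \<noteq> s!p" using d p t unfolding desc_def by auto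
  hence "t - 1 \<noteq> p" by auto
  hence pt: "p < t - 1" using p by simp
  have "p = t - 2"
  proof (rule ccontr)
    assume "p \<noteq> t - 2"
    hence pt2: "p < t - 2" using pt by simp
    have a: "s!(t-2) \<le> s!p" "s!(t-1) \<le> s!p" using p pt2 t by auto
    have "t - 2 < n" "p < n" using pt2 t by auto
    hence b: "s!(t-2) \<noteq> s!p" using perm_inj[OF s, of "t-2" p] pt2 by auto
    have "s!(t-2) < s!p" "s!(t-1) < s!p" using a b l by auto
    moreover have "p < t - 2" "t - 2 < t - 1" "t - 1 < t" using pt2 t by auto
    ultimately show False using ok unfolding okA_def by blast
  qed
  thus ?thesis using pt l by simp
qed

lemma A4: "TC n (St s) \<Longrightarrow> okA s (Suc (Suc (pos s n)))"
proof -
  assume tc: "TC n (St s)"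
  interpret T: tc_ctx s n using s n1 tc by unfold_locales
  note pf = perm_facts[OF s]
  show ?thesis unfolding okA_def
  proof
    assume "\<exists>i j k. i<j \<and> j<k \<and> k<Suc (Suc (pos s n)) \<and> s!j<s!i \<and> s!k<s!i"
    then obtain i j k where h: "i<j" "j<k" "k<Suc (Suc (pos s n))" "s!j<s!i" "s!k<s!i" by blast
    have kn: "k < n" using T.posn_lt h by simp
    have "s!i \<le> n" using pf h kn by simp
    have kne: "k \<noteq> pos s n" using h pn \<open>s!i \<le> n\<close> by auto
    consider "k < pos s n" | "k = Suc (pos s n)" using h kne by linarith
    then show False
    proof cases
      case 1
      have "s!i \<noteq> n" using perm_inj[OF s, of i "pos s n"] pn h 1 by auto
      hence "s!i < s!(pos s n)" using \<open>s!i \<le> n\<close> pn by simp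
      then show False using A h 1 pn pf unfolding Aok_def by blast
    next
      case 2
      have jne: "j \<noteq> pos s n" using h pn \<open>s!i \<le> n\<close> by auto
      hence jl: "j < pos s n" using h 2 by simp
      have "i = pos s (s!i)" using pos_nth[of s i] pf h jl pn by simp
      have in_: "s!i \<noteq> n" using perm_inj[OF s, of i "pos s n"] pn h jl by auto
      have i1: "1 \<le> s!i" using pf h jl pn by simp
      show False
      proof (cases "T.m < s!i")
        case True
        have "s!i \<le> s!j" using T.run_val[OF True \<open>s!i \<le> n\<close>, of j] \<open>i = pos s (s!i)\<close> h jl by simp
        then show False using h by simp
      next
        case False
        have "pos s T.m \<noteq> i" using T.posm h jl by simp
        hence "s!i \<noteq> T.m" using perm_pos[OF s, of T.m] T.m_props \<open>i = pos s (s!i)\<close> by metis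
        hence am: "s!i < T.m" using False by simp
        have pm: "pos s T.m < n" "s!(pos s T.m) = T.m" using perm_pos[OF s, of T.m] T.m_props by auto
        have "pos s T.m \<noteq> k" using pm h am by auto
        hence kp: "k < pos s T.m" using T.posm 2 by simp
        have "pos s T.m < length s" using pm pf by simp
        moreover have "s!i < s!(pos s T.m)" using pm am by simp
        ultimately show False using A h(1,2,4,5) kp unfolding Aok_def by blast
      qed
    qed
  qed
qed

lemma A5:
  assumes t: "1 \<le> t" "t \<le> n" and ok: "okA s t" and d: "desc s t = Some (n, False)"
  shows "TC n (St s)"
proof -
  note pf = perm_facts[OF s]
  have a3: "2 \<le> t" "s!(t-2) = n" using A3[OF t ok d] by auto
  hence "t - 2 = pos s n" using perm_inj[OF s, of "t-2" "pos s n"] pn t by simp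
  hence tq: "t = Suc (Suc (pos s n))" using a3 by simp
  hence qlt: "Suc (pos s n) < n" using t by simp
  obtain k0 where k0: "Suc (pos s n) \<le> k0" "k0 < n" "\<forall>k. Suc (pos s n) \<le> k \<and> k < n \<longrightarrow> s!k \<le> s!k0"
    using exists_argmax[OF qlt, of "\<lambda>k. s!k"] by blast
  show ?thesis
  proof (rule TC_intro[OF s n1, of k0])
    show "pos s n < k0" "k0 < n" using k0 by auto
    show "\<And>k. pos s n < k \<Longrightarrow> k < n \<Longrightarrow> s!k \<le> s!k0" using k0 by auto
    fix i j assume h: "i < j" "j < pos s n" "s!k0 < s!i"
    have f1: "s!(Suc (pos s n)) < s!i" using k0 qlt h by (meson le_refl order_le_less_trans)
    show "s!i < s!j"
    proof (rule ccontr)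
      assume "\<not> s!i < s!j"
      moreover have "s!i \<noteq> s!j" using perm_inj[OF s, of i j] h pn by auto
      ultimately have "s!j < s!i" by simp
      moreover have "j < Suc (pos s n)" "Suc (pos s n) < t" using h tq by auto
      ultimately show False using ok h f1 unfolding okA_def by blast
    qed
  qed
qed

lemma A_bij: "bij_betw (desc s) {t. t \<le> n \<and> okA s t} (Dset n (St s))"
proof -
  note pf = perm_facts[OF s]
  let ?V = "{t. t \<le> n \<and> okA s t}"
  have inj: "inj_on (desc s) ?V"
  proof (rule inj_onI)
    fix t t' assume tV: "t \<in> ?V" and t'V: "t' \<in> ?V" and eq: "desc s t = desc s t'"
    show "t = t'"
    proof (cases "t = 0")
      case True then show ?thesis using eq desc_None_iff by metis
    next
      case False
      hence t'0: "t' \<noteq> 0" using eq desc_None_iff by metis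
      obtain l b where lb: "desc s t = Some (l, b)" using desc_some_pos[OF s, of t] False tV by auto
      show ?thesis
      proof (cases b)
        case True
        then show ?thesis using desc_True_inj[OF s, of t t' l] lb eq tV t'V False t'0 by simp
      next
        case False
        have "2 \<le> t \<and> s!(t-2) = l" using A3[of t l] lb False tV \<open>t \<noteq> 0\<close> by simp
        moreover have "2 \<le> t' \<and> s!(t'-2) = l" using A3[of t' l] lb eq False t'V t'0 by simp
        moreover have "t - 2 < n" "t' - 2 < n" using tV t'V calculation by auto
        ultimately have "t - 2 = t' - 2" using perm_inj[OF s, of "t-2" "t'-2"] by simp
        moreover have "2 \<le> t" "2 \<le> t'" using \<open>2 \<le> t \<and> _\<close> \<open>2 \<le> t' \<and> _\<close> by auto
        ultimately show ?thesis by linarith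
      qed
    qed
  qed
  have sub1: "desc s ` ?V \<subseteq> Dset n (St s)"
  proof
    fix d assume "d \<in> desc s ` ?V"
    then obtain t where t: "t \<le> n" "okA s t" "d = desc s t" by blast
    show "d \<in> Dset n (St s)"
    proof (cases "t = 0")
      case True then show ?thesis using t unfolding Dset_St desc_def by simp
    next
      case False
      obtain l b where lb: "d = Some (l, b)" using desc_some_pos[OF s, of t] False t by auto
      show ?thesis
      proof (cases b)
        case True
        hence "l \<in> Lrmax s" using desc_general[OF s, of t l b] lb t False by simp
        then show ?thesis using lb True unfolding Dset_St by simp
      next
        case F: False
        hence lB: "l \<in> Br s" using desc_general[OF s, of t l b] lb t False by simp
        show ?thesis
        proof (cases "l = n")
          case True
          hence "TC n (St s)" using A5[of t] t lb F False by simp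
          then show ?thesis using lb F True unfolding Dset_St by simp
        next
          case False
          then show ?thesis using lb F lB unfolding Dset_St by simp
        qed
      qed
    qed
  qed
  have sub2: "Dset n (St s) \<subseteq> desc s ` ?V"
  proof
    fix d assume d: "d \<in> Dset n (St s)"
    have mem: "\<And>t. t \<le> n \<Longrightarrow> okA s t \<Longrightarrow> desc s t \<in> desc s ` ?V" by blast
    consider "d = None" | l where "d = Some (l, True)" "l \<in> Lrmax s"
      | l where "d = Some (l, False)" "l \<in> Br s" "l \<noteq> n" | "d = Some (n, False)" "TC n (St s)"
      using d unfolding Dset_St by (auto split: if_splits)
    then show "d \<in> desc s ` ?V"
    proof cases
      case 1
      have "okA s 0" unfolding okA_def by simp
      moreover have "desc s 0 = None" using desc_None_iff by simp
      ultimately show ?thesis using 1 mem[of 0] by simp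
    next
      case (2 l)
      note lp = lrm_pos[OF s 2(2)]
      have "pos s l \<le> pos s n" using lrm_le_posn[OF s n1] lp by simp
      hence "okA s (Suc (pos s l))" using A0 by simp
      moreover have "Suc (pos s l) \<le> n" using lp pf unfolding lrm_def by simp
      moreover have "desc s (Suc (pos s l)) = d" using desc_H[OF s lp[THEN conjunct1]] lp 2 by simp
      ultimately show ?thesis using mem by metis
    next
      case (3 l)
      obtain i where i: "l = s!i" "lrm s i" "Suc i < length s \<longrightarrow> s!(Suc i) < s!i"
        using 3(2) unfolding Br_pos[OF s] by blast
      have "s!i < n" using i 3 pf unfolding lrm_def by (metis le_neq_implies_less)
      hence ipn: "i < pos s n" using lrm_le_posn[OF s n1 i(2)] by simp
      hence si: "Suc i < n" using pn by simp
      hence lt: "s!(Suc i) < s!i" using i pf by simp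
      have ub: "\<And>k. k < Suc (Suc i) \<Longrightarrow> s!k \<le> s!i"
      proof -
        fix k assume "k < Suc (Suc i)"
        then consider "k < i" | "k = i" | "k = Suc i" by linarith
        then show "s!k \<le> s!i"
        proof cases
          case 1 then show ?thesis using i(2) unfolding lrm_def by (simp add: less_imp_le)
        next
          case 2 then show ?thesis by simp
        next
          case 3 then show ?thesis using lt by simp
        qed
      qed
      have "desc s (Suc (Suc i)) = Some (s!i, s!(Suc i) = s!i)"
        using desc_eq[OF s, of i "Suc (Suc i)"] ub si by simp
      hence "desc s (Suc (Suc i)) = d" using lt i 3 by simp
      moreover have "okA s (Suc (Suc i))" using A0 ipn by simp
      moreover have "Suc (Suc i) \<le> n" using si by simp
      ultimately show ?thesis using mem by metis
    next
      case 4
      interpret T: tc_ctx s n using s n1 4(2) by unfold_locales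
      have tn: "Suc (Suc (pos s n)) \<le> n" using T.posn_lt by simp
      have ub: "\<And>k. k < Suc (Suc (pos s n)) \<Longrightarrow> s!k \<le> s!(pos s n)" using pf pn tn by simp
      have "s!(Suc (pos s n)) \<noteq> s!(pos s n)" using perm_inj[OF s, of "Suc (pos s n)" "pos s n"] tn pn by fastforce
      hence "desc s (Suc (Suc (pos s n))) = d"
        using desc_eq[OF s, of "pos s n" "Suc (Suc (pos s n))"] ub tn pn 4 by simp
      moreover have "okA s (Suc (Suc (pos s n)))" using A4 4 by simp
      ultimately show ?thesis using mem tn by metis
    qed
  qed
  show ?thesis unfolding bij_betw_def using inj sub1 sub2 by blast
qed

end



definition okB :: "nat list \<Rightarrow> nat \<Rightarrow> nat \<Rightarrow> bool" where
  "okB s n t \<longleftrightarrow> \<not>(\<exists>i j l. i<j \<and> j<t \<and> t\<le>l \<and> l<n \<and> s!j<s!i \<and> s!l<s!i)"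

locale B_ctx =
  fixes s n
  assumes s: "s \<in> perms n" and n1: "1 \<le> n" and B: "Bok s"
begin

lemma pn: "pos s n < n" "s!(pos s n) = n" using perm_pos[OF s n1 order_refl] by auto

lemma B1: "lrm s p \<Longrightarrow> okB s n (Suc p)"
  unfolding okB_def
proof
  assume lp: "lrm s p" and "\<exists>i j l. i<j \<and> j<Suc p \<and> Suc p\<le>l \<and> l<n \<and> s!j<s!i \<and> s!l<s!i"
  then obtain i j l where h: "i<j" "j<Suc p" "Suc p\<le>l" "l<n" "s!j<s!i" "s!l<s!i" by blast
  note pf = perm_facts[OF s]
  have ip: "s!i < s!p" using lp h unfolding lrm_def by simp
  hence "j \<noteq> p" using h by auto
  hence "j < p" using h by simp
  moreover have "p < l" "l < length s" using h pf by auto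
  ultimately show False using B h ip unfolding Bok_def by blast
qed

lemma B3:
  assumes t: "1 \<le> t" "t < n" and ok: "okB s n t" and d: "desc s t = Some (l, False)"
  shows "l < s!t"
proof -
  note pf = perm_facts[OF s]
  obtain p where p: "p < t" "s!p = Max (set (take t s))" "lrm s p" "\<And>i. i < t \<Longrightarrow> s!i \<le> Max (set (take t s))"
    using prefix_max[OF s t(1) less_imp_le[OF t(2)]] by blast
  have l: "l = s!p" "s!(t-1) \<noteq> s!p" using d p t unfolding desc_def by auto
  hence "t - 1 \<noteq> p" by auto
  hence pt: "p < t - 1" using p by simp
  have "s!t \<noteq> s!p" using perm_inj[OF s, of t p] p t by auto
  moreover have "\<not> s!t < s!p"
  proof
    assume "s!t < s!p"
    moreover have "s!(t-1) < s!p" using p(4)[of "t-1"] l t p(2) by (simp add: order_le_neq_trans)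
    moreover have "p < t - 1" "t - 1 < t" "t \<le> t" "t < n" using pt t by auto
    ultimately show False using ok unfolding okB_def by blast
  qed
  ultimately show ?thesis using l by simp
qed

lemma B5:
  assumes t: "1 \<le> t" "t \<le> n" and ok: "okB s n t" and d: "desc s t = Some (n, False)"
  shows "TC n (St s)"
proof -
  note pf = perm_facts[OF s]
  obtain p where p: "p < t" "s!p = Max (set (take t s))" "lrm s p" "\<And>i. i < t \<Longrightarrow> s!i \<le> Max (set (take t s))"
    using prefix_max[OF s t] by blast
  have l: "n = s!p" "s!(t-1) \<noteq> s!p" using d p t unfolding desc_def by auto
  hence "t - 1 \<noteq> p" by auto
  hence pt: "p < t - 1" using p by simp
  have "p = pos s n" using perm_inj[OF s, of p "pos s n"] pn l p t by simp
  hence qlt: "Suc (pos s n) < n" using pt t by simp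
  obtain k0 where k0: "Suc (pos s n) \<le> k0" "k0 < n" "\<forall>k. Suc (pos s n) \<le> k \<and> k < n \<longrightarrow> s!k \<le> s!k0"
    using exists_argmax[OF qlt, of "\<lambda>k. s!k"] by blast
  show ?thesis
  proof (rule TC_intro[OF s n1, of k0])
    show "pos s n < k0" "k0 < n" using k0 by auto
    show "\<And>k. pos s n < k \<Longrightarrow> k < n \<Longrightarrow> s!k \<le> s!k0" using k0 by auto
    fix i j assume h: "i < j" "j < pos s n" "s!k0 < s!i"
    show "s!i < s!j"
    proof (rule ccontr)
      assume "\<not> s!i < s!j"
      moreover have "s!i \<noteq> s!j" using perm_inj[OF s, of i j] h pn by auto
      ultimately have "s!j < s!i" by simp
      moreover have "s!i \<noteq> n" using perm_inj[OF s, of i "pos s n"] pn h by auto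
      hence "s!i < s!(pos s n)" using pf pn h by (simp add: le_neq_implies_less)
      moreover have "pos s n < k0" "k0 < length s" using k0 pf by auto
      ultimately show False using B h unfolding Bok_def by blast
    qed
  qed
qed

lemma B_bij: "bij_betw (desc s) {t. t \<le> n \<and> okB s n t} (Dset n (St s))"
proof -
  note pf = perm_facts[OF s]
  let ?V = "{t. t \<le> n \<and> okB s n t}"
  have inj: "inj_on (desc s) ?V"
  proof (rule inj_onI)
    fix t t' assume tV: "t \<in> ?V" and t'V: "t' \<in> ?V" and eq: "desc s t = desc s t'"
    show "t = t'"
    proof (cases "t = 0")
      case True then show ?thesis using eq desc_None_iff by metis
    next
      case False
      hence t'0: "t' \<noteq> 0" using eq desc_None_iff by metis
      obtain l b where lb: "desc s t = Some (l, b)" using desc_some_pos[OF s, of t] False tV by auto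
      show ?thesis
      proof (cases b)
        case True
        then show ?thesis using desc_True_inj[OF s, of t t' l] lb eq tV t'V False t'0 by simp
      next
        case F: False
        have gen: "\<And>a a'. a \<in> ?V \<Longrightarrow> a' \<in> ?V \<Longrightarrow> a \<noteq> 0 \<Longrightarrow> a' \<noteq> 0 \<Longrightarrow> a < a' \<Longrightarrow>
            desc s a = Some (l, False) \<Longrightarrow> desc s a' = Some (l, False) \<Longrightarrow> False"
        proof -
          fix a a' assume a: "a \<in> ?V" "a' \<in> ?V" "a \<noteq> 0" "a' \<noteq> 0" "a < a'"
            "desc s a = Some (l, False)" "desc s a' = Some (l, False)"
          have "l < s!a" using B3[of a l] a by simp
          moreover have "s!a \<le> Max (set (take a' s))"
          proof -
            have "s!a \<in> set (take a' s)" using a pf by (simp add: in_set_conv_nth) (metis length_take min.absorb4 nth_take)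
            thus ?thesis by simp
          qed
          moreover have "Max (set (take a' s)) = l" using a(4,7) unfolding desc_def by auto
          ultimately show False by simp
        qed
        show ?thesis
        proof (rule ccontr)
          assume "t \<noteq> t'"
          then consider "t < t'" | "t' < t" by linarith
          then show False
            using gen[of t t'] gen[of t' t] tV t'V False t'0 lb eq F by auto
        qed
      qed
    qed
  qed
  have sub1: "desc s ` ?V \<subseteq> Dset n (St s)"
  proof
    fix d assume "d \<in> desc s ` ?V"
    then obtain t where t: "t \<le> n" "okB s n t" "d = desc s t" by blast
    show "d \<in> Dset n (St s)"
    proof (cases "t = 0")
      case True then show ?thesis using t unfolding Dset_St desc_def by simp
    next
      case False
      obtain l b where lb: "d = Some (l, b)" using desc_some_pos[OF s, of t] False t by auto
      show ?thesis
      proof (cases b)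
        case True
        hence "l \<in> Lrmax s" using desc_general[OF s, of t l b] lb t False by simp
        then show ?thesis using lb True unfolding Dset_St by simp
      next
        case F: False
        hence lB: "l \<in> Br s" using desc_general[OF s, of t l b] lb t False by simp
        show ?thesis
        proof (cases "l = n")
          case True
          hence "TC n (St s)" using B5[of t] t lb F False by simp
          then show ?thesis using lb F True unfolding Dset_St by simp
        next
          case False
          then show ?thesis using lb F lB unfolding Dset_St by simp
        qed
      qed
    qed
  qed
  have sub2: "Dset n (St s) \<subseteq> desc s ` ?V"
  proof
    fix d assume d: "d \<in> Dset n (St s)"
    have mem: "\<And>t. t \<le> n \<Longrightarrow> okB s n t \<Longrightarrow> desc s t \<in> desc s ` ?V" by blast
    consider "d = None" | l where "d = Some (l, True)" "l \<in> Lrmax s"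
      | l where "d = Some (l, False)" "l \<in> Br s" "l \<noteq> n" | "d = Some (n, False)" "TC n (St s)"
      using d unfolding Dset_St by (auto split: if_splits)
    then show "d \<in> desc s ` ?V"
    proof cases
      case 1
      have "okB s n 0" unfolding okB_def by simp
      moreover have "desc s 0 = None" using desc_None_iff by simp
      ultimately show ?thesis using 1 mem[of 0] by simp
    next
      case (2 l)
      note lp = lrm_pos[OF s 2(2)]
      have "okB s n (Suc (pos s l))" using B1 lp by simp
      moreover have "Suc (pos s l) \<le> n" using lp pf unfolding lrm_def by simp
      moreover have "desc s (Suc (pos s l)) = d" using desc_H[OF s lp[THEN conjunct1]] lp 2 by simp
      ultimately show ?thesis using mem by metis
    next
      case (3 l)
      obtain i where i: "l = s!i" "lrm s i" "Suc i < length s \<longrightarrow> s!(Suc i) < s!i"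
        using 3(2) unfolding Br_pos[OF s] by blast
      have "s!i < n" using i 3 pf unfolding lrm_def by (metis le_neq_implies_less)
      hence ipn: "i < pos s n" using lrm_le_posn[OF s n1 i(2)] by simp
      hence si: "Suc i < n" using pn by simp
      hence lt: "s!(Suc i) < s!i" using i pf by simp
      define t where "t = (LEAST k. i < k \<and> s!i < s!k)"
      have ex: "i < pos s n \<and> s!i < s!(pos s n)" using ipn pn \<open>s!i < n\<close> by simp
      have tP: "i < t \<and> s!i < s!t" unfolding t_def by (rule LeastI[of _ "pos s n"]) (use ex in simp)
      have tle: "t \<le> pos s n" unfolding t_def by (rule Least_le) (use ex in simp)
      have btw: "\<And>k. i < k \<Longrightarrow> k < t \<Longrightarrow> s!k \<le> s!i"
        using not_less_Least[of _ "\<lambda>k. i < k \<and> s!i < s!k"] unfolding t_def[symmetric] by (meson not_le)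
      have tn: "t < n" using tle pn by simp
      have ub: "\<And>k. k < t \<Longrightarrow> s!k \<le> s!i"
      proof -
        fix k assume "k < t"
        consider "k < i" | "k = i" | "i < k" by linarith
        then show "s!k \<le> s!i"
        proof cases
          case 1 then show ?thesis using i(2) unfolding lrm_def by (simp add: less_imp_le)
        next
          case 2 then show ?thesis by simp
        next
          case 3 then show ?thesis using btw \<open>k < t\<close> by simp
        qed
      qed
      have "Suc i \<noteq> t" using tP lt by auto
      hence sit: "Suc i < t" using tP by simp
      have "s!(t-1) \<noteq> s!i" using perm_inj[OF s, of "t-1" i] sit tn by auto
      hence "desc s t = d" using desc_eq[OF s, of i t] ub tP tn 3 i by simp
      moreover have "okB s n t" unfolding okB_def
      proof
        assume "\<exists>i' j l'. i'<j \<and> j<t \<and> t\<le>l' \<and> l'<n \<and> s!j<s!i' \<and> s!l'<s!i'"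
        then obtain i' j l' where h: "i'<j" "j<t" "t\<le>l'" "l'<n" "s!j<s!i'" "s!l'<s!i'" by blast
        have "s!i' \<le> s!i" using ub h by simp
        hence "s!i' < s!t" using tP by simp
        hence "t \<noteq> l'" using h by auto
        hence "t < l'" using h by simp
        moreover have "l' < length s" using h pf by simp
        ultimately show False using B h \<open>s!i' < s!t\<close> unfolding Bok_def by blast
      qed
      ultimately show ?thesis using mem tn by (metis less_imp_le)
    next
      case 4
      interpret T: tc_ctx s n using s n1 4(2) by unfold_locales
      have ub: "\<And>k. k < n \<Longrightarrow> s!k \<le> s!(pos s n)" using pf pn by simp
      have "n - 1 \<noteq> pos s n" using T.posn_lt by simp
      hence "s!(n-1) \<noteq> s!(pos s n)" using perm_inj[OF s, of "n-1" "pos s n"] pn n1 by fastforce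
      hence "desc s n = d" using desc_eq[OF s, of "pos s n" n] ub pn 4 by simp
      moreover have "okB s n n" unfolding okB_def by auto
      ultimately show ?thesis using mem by (metis le_refl)
    qed
  qed
  show ?thesis unfolding bij_betw_def using inj sub1 sub2 by blast
qed

end



lemma perms_finite: "finite (perms n)"
proof -
  have "perms n \<subseteq> {xs. set xs \<subseteq> {1..n} \<and> length xs = n}" using perms_len unfolding perms_def by auto
  thus ?thesis using finite_lists_length_eq[of "{1..n}" n] finite_subset by auto
qed

lemma fiber_count:
  fixes X :: "'a set" and f :: "'a \<Rightarrow> 'b" and g :: "'b \<Rightarrow> nat"
  assumes "finite X"
  shows "(\<Sum>x\<in>X. g (f x)) = (\<Sum>u\<in>f ` X. card {x\<in>X. f x = u} * g u)"
proof -
  have "(\<Sum>x\<in>X. g (f x)) = (\<Sum>u\<in>f ` X. \<Sum>x\<in>{x. x \<in> X \<and> f x = u}. g (f x))"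
    by (rule sum.image_gen[OF assms])
  also have "\<dots> = (\<Sum>u\<in>f ` X. card {x\<in>X. f x = u} * g u)"
    by (rule sum.cong) auto
  finally show ?thesis .
qed

lemma sum_equal_fibers:
  fixes X Y :: "'a set" and f :: "'a \<Rightarrow> 'b" and g :: "'b \<Rightarrow> nat"
  assumes X: "finite X" and Y: "finite Y" and c: "\<And>u. card {x\<in>X. f x = u} = card {x\<in>Y. f x = u}"
  shows "(\<Sum>x\<in>X. g (f x)) = (\<Sum>x\<in>Y. g (f x))"
proof -
  have im: "f ` X = f ` Y"
  proof -
    have "u \<in> f ` X \<longleftrightarrow> card {x\<in>X. f x = u} > 0" for u using X by (auto simp: card_gt_0_iff)
    moreover have "u \<in> f ` Y \<longleftrightarrow> card {x\<in>Y. f x = u} > 0" for u using Y by (auto simp: card_gt_0_iff)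
    ultimately show ?thesis using c by (intro set_eqI) simp
  qed
  show ?thesis unfolding fiber_count[OF X] fiber_count[OF Y] im c ..
qed

definition VA :: "nat list \<Rightarrow> nat \<Rightarrow> nat set" where "VA s n = {t. t \<le> n \<and> okA s t}"
definition VB :: "nat list \<Rightarrow> nat \<Rightarrow> nat set" where "VB s n = {t. t \<le> n \<and> okB s n t}"

definition gcount :: "nat \<Rightarrow> stat \<Rightarrow> stat \<Rightarrow> nat" where
  "gcount n v u = card {d \<in> Dset n u. cf n u d = v}"

lemma local_count:
  assumes s: "s \<in> perms n" and n1: "1 \<le> n" and bij: "bij_betw (desc s) V (Dset n (St s))" and V: "V \<subseteq> {..n}"
  shows "card {t\<in>V. St (ins (Suc n) s t) = v} = gcount n v (St s)"
proof -
  have e1: "{t\<in>V. St (ins (Suc n) s t) = v} = {t\<in>V. cf n (St s) (desc s t) = v}"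
    using St_ins[OF s n1] V by auto
  have b: "bij_betw (desc s) {t\<in>V. cf n (St s) (desc s t) = v} {d \<in> Dset n (St s). cf n (St s) d = v}"
  proof -
    have "inj_on (desc s) V" using bij by (simp add: bij_betw_def)
    hence i: "inj_on (desc s) {t\<in>V. cf n (St s) (desc s t) = v}"
      by (rule inj_on_subset) auto
    have e: "desc s ` V = Dset n (St s)" using bij unfolding bij_betw_def by blast
    have "desc s ` {t\<in>V. cf n (St s) (desc s t) = v} = {d \<in> desc s ` V. cf n (St s) d = v}" by blast
    hence im: "desc s ` {t\<in>V. cf n (St s) (desc s t) = v} = {d \<in> Dset n (St s). cf n (St s) d = v}"
      unfolding e .
    show ?thesis unfolding bij_betw_def using i im by blast
  qed
  show ?thesis unfolding gcount_def e1 by (rule bij_betw_same_card[OF b])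
qed

lemma ins_image_A:
  assumes n1: "1 \<le> n"
  shows "{q \<in> perms (Suc n). Aok q} = (\<lambda>(s,t). ins (Suc n) s t) ` (SIGMA s:{s\<in>perms n. Aok s}. VA s n)"
proof (rule set_eqI, rule iffI)
  fix q assume "q \<in> {q \<in> perms (Suc n). Aok q}"
  then obtain s t where st: "s \<in> perms n" "t \<le> n" "q = ins (Suc n) s t" "Aok q" using ins_remove by blast
  hence "Aok s" "okA s t" using ins_Aok[OF st(1,2)] unfolding okA_def by auto
  thus "q \<in> (\<lambda>(s,t). ins (Suc n) s t) ` (SIGMA s:{s\<in>perms n. Aok s}. VA s n)"
    using st unfolding VA_def by force
next
  fix q assume "q \<in> (\<lambda>(s,t). ins (Suc n) s t) ` (SIGMA s:{s\<in>perms n. Aok s}. VA s n)"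
  then obtain s t where st: "s \<in> perms n" "Aok s" "t \<le> n" "okA s t" "q = ins (Suc n) s t"
    unfolding VA_def by auto
  thus "q \<in> {q \<in> perms (Suc n). Aok q}" using ins_perms ins_Aok[OF st(1,3)] unfolding okA_def by auto
qed

lemma ins_image_B:
  assumes n1: "1 \<le> n"
  shows "{q \<in> perms (Suc n). Bok q} = (\<lambda>(s,t). ins (Suc n) s t) ` (SIGMA s:{s\<in>perms n. Bok s}. VB s n)"
proof (rule set_eqI, rule iffI)
  fix q assume "q \<in> {q \<in> perms (Suc n). Bok q}"
  then obtain s t where st: "s \<in> perms n" "t \<le> n" "q = ins (Suc n) s t" "Bok q" using ins_remove by blast
  hence "Bok s" "okB s n t" using ins_Bok[OF st(1,2)] unfolding okB_def by auto
  thus "q \<in> (\<lambda>(s,t). ins (Suc n) s t) ` (SIGMA s:{s\<in>perms n. Bok s}. VB s n)"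
    using st unfolding VB_def by force
next
  fix q assume "q \<in> (\<lambda>(s,t). ins (Suc n) s t) ` (SIGMA s:{s\<in>perms n. Bok s}. VB s n)"
  then obtain s t where st: "s \<in> perms n" "Bok s" "t \<le> n" "okB s n t" "q = ins (Suc n) s t"
    unfolding VB_def by auto
  thus "q \<in> {q \<in> perms (Suc n). Bok q}" using ins_perms ins_Bok[OF st(1,3)] unfolding okB_def by auto
qed

lemma ins_inj_on: "inj_on (\<lambda>(s,t). ins (Suc n) s t) (SIGMA s:perms n. {..n})"
proof (rule inj_onI, clarsimp)
  fix s t s' t' assume "s \<in> perms n" "t \<le> n" "s' \<in> perms n" "t' \<le> n" "ins (Suc n) s t = ins (Suc n) s' t'"
  moreover have "Suc n \<notin> set s" "Suc n \<notin> set s'" using calculation unfolding perms_def by auto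
  ultimately show "s = s' \<and> t = t'" using ins_inj[of "Suc n" s s' t t'] perms_len by metis
qed

lemma count_step:
  fixes P :: "nat list \<Rightarrow> bool" and V :: "nat list \<Rightarrow> nat set"
  assumes n1: "1 \<le> n"
    and img: "{q \<in> perms (Suc n). P q} = (\<lambda>(s,t). ins (Suc n) s t) ` (SIGMA s:{s\<in>perms n. P s}. V s)"
    and Vsub: "\<And>s. V s \<subseteq> {..n}"
    and bij: "\<And>s. s \<in> perms n \<Longrightarrow> P s \<Longrightarrow> bij_betw (desc s) (V s) (Dset n (St s))"
  shows "card {q \<in> perms (Suc n). P q \<and> St q = v} = (\<Sum>s\<in>{s\<in>perms n. P s}. gcount n v (St s))"
proof -
  let ?S = "SIGMA s:{s\<in>perms n. P s}. V s"
  let ?h = "\<lambda>(s,t). ins (Suc n) s t"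
  have "?S \<subseteq> (SIGMA s:perms n. {..n})" using Vsub by auto
  hence inj: "inj_on ?h ?S" using ins_inj_on[of n] inj_on_subset by blast
  have "{q \<in> perms (Suc n). P q \<and> St q = v} = {q \<in> ?h ` ?S. St q = v}"
    using img by blast
  also have "\<dots> = ?h ` {x \<in> ?S. St (?h x) = v}" by blast
  finally have "{q \<in> perms (Suc n). P q \<and> St q = v} = ?h ` {x \<in> ?S. St (?h x) = v}" .
  hence "card {q \<in> perms (Suc n). P q \<and> St q = v} = card {x \<in> ?S. St (?h x) = v}"
    using card_image inj_on_subset[OF inj] by (metis (no_types, lifting) mem_Collect_eq subsetI)
  also have "{x \<in> ?S. St (?h x) = v} = (SIGMA s:{s\<in>perms n. P s}. {t \<in> V s. St (ins (Suc n) s t) = v})"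
    by auto
  also have "card \<dots> = (\<Sum>s\<in>{s\<in>perms n. P s}. card {t \<in> V s. St (ins (Suc n) s t) = v})"
  proof (rule card_SigmaI)
    show "finite {s\<in>perms n. P s}" using perms_finite by simp
    show "\<forall>s\<in>{s\<in>perms n. P s}. finite {t \<in> V s. St (ins (Suc n) s t) = v}"
    proof
      fix s
      have "{t \<in> V s. St (ins (Suc n) s t) = v} \<subseteq> {..n}" using Vsub[of s] by auto
      thus "finite {t \<in> V s. St (ins (Suc n) s t) = v}" using finite_subset by blast
    qed
  qed
  also have "\<dots> = (\<Sum>s\<in>{s\<in>perms n. P s}. gcount n v (St s))"
    using local_count[OF _ n1 bij Vsub] by (intro sum.cong) auto
  finally show ?thesis .
qed

lemma equi:
  assumes "1 \<le> n"
  shows "card {q \<in> perms n. Aok q \<and> St q = v} = card {q \<in> perms n. Bok q \<and> St q = v}"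
  using assms
proof (induction n arbitrary: v rule: dec_induct)
  case base
  have "Aok q \<and> Bok q" if "q \<in> perms 1" for q
    using perms_len[OF that] unfolding Aok_def Bok_def by auto
  then show ?case by (metis (mono_tags, lifting))
next
  case (step n)
  have cA: "card {q \<in> perms (Suc n). Aok q \<and> St q = v} = (\<Sum>s\<in>{s\<in>perms n. Aok s}. gcount n v (St s))"
  proof (rule count_step[OF step.hyps(1) ins_image_A[OF step.hyps(1)]])
    show "\<And>s. VA s n \<subseteq> {..n}" unfolding VA_def by auto
    show "\<And>s. s \<in> perms n \<Longrightarrow> Aok s \<Longrightarrow> bij_betw (desc s) (VA s n) (Dset n (St s))"
    proof -
      fix s assume "s \<in> perms n" "Aok s"
      then interpret A_ctx s n using step.hyps(1) by unfold_locales
      show "bij_betw (desc s) (VA s n) (Dset n (St s))" unfolding VA_def by (rule A_bij)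
    qed
  qed
  have cB: "card {q \<in> perms (Suc n). Bok q \<and> St q = v} = (\<Sum>s\<in>{s\<in>perms n. Bok s}. gcount n v (St s))"
  proof (rule count_step[OF step.hyps(1) ins_image_B[OF step.hyps(1)]])
    show "\<And>s. VB s n \<subseteq> {..n}" unfolding VB_def by auto
    show "\<And>s. s \<in> perms n \<Longrightarrow> Bok s \<Longrightarrow> bij_betw (desc s) (VB s n) (Dset n (St s))"
    proof -
      fix s assume "s \<in> perms n" "Bok s"
      then interpret B_ctx s n using step.hyps(1) by unfold_locales
      show "bij_betw (desc s) (VB s n) (Dset n (St s))" unfolding VB_def by (rule B_bij)
    qed
  qed
  have "(\<Sum>s\<in>{s\<in>perms n. Aok s}. gcount n v (St s)) = (\<Sum>s\<in>{s\<in>perms n. Bok s}. gcount n v (St s))"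
  proof (rule sum_equal_fibers[where f=St and g="gcount n v"])
    show "finite {s\<in>perms n. Aok s}" "finite {s\<in>perms n. Bok s}" using perms_finite by auto
    fix u
    have "{x \<in> {s\<in>perms n. Aok s}. St x = u} = {q \<in> perms n. Aok q \<and> St q = u}" by auto
    moreover have "{x \<in> {s\<in>perms n. Bok s}. St x = u} = {q \<in> perms n. Bok q \<and> St q = u}" by auto
    ultimately show "card {x \<in> {s\<in>perms n. Aok s}. St x = u} = card {x \<in> {s\<in>perms n. Bok s}. St x = u}"
      using step.IH by simp
  qed
  then show ?case using cA cB by simp
qed

theorem theorem2p1:
  fixes n :: nat
  assumes "n \<ge> 1"
  shows "\<exists>\<phi>. bij_betw \<phi> (avoids_all n [[3,1,2,4],[3,2,1,4]]) (avoids_all n [[3,1,4,2],[3,2,4,1]])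
           \<and> (\<forall>\<pi>\<in>avoids_all n [[3,1,2,4],[3,2,1,4]].
                 (Br \<pi>, Ides \<pi>, Lrmax \<pi>, Lrmin \<pi>, Iar \<pi>)
               = (Br (\<phi> \<pi>), Ides (\<phi> \<pi>), Lrmax (\<phi> \<pi>), Lrmin (\<phi> \<pi>), Iar (\<phi> \<pi>)))"
proof -
  let ?A = "avoids_all n [[3,1,2,4],[3,2,1,4]]"
  let ?B = "avoids_all n [[3,1,4,2],[3,2,4,1]]"
  have fa: "\<And>v. {q\<in>?A. St q = v} = {q \<in> perms n. Aok q \<and> St q = v}" using A_char by blast
  have fb: "\<And>v. {q\<in>?B. St q = v} = {q \<in> perms n. Bok q \<and> St q = v}" using B_char by blast
  have ex: "\<forall>v. \<exists>h. bij_betw h {q\<in>?A. St q = v} {q\<in>?B. St q = v}"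
  proof
    fix v
    show "\<exists>h. bij_betw h {q\<in>?A. St q = v} {q\<in>?B. St q = v}"
      unfolding fa fb using equi[OF assms, of v] perms_finite
      by (intro finite_same_card_bij) auto
  qed
  hence "\<exists>H. \<forall>v. bij_betw (H v) {q\<in>?A. St q = v} {q\<in>?B. St q = v}" by (rule choice)
  then obtain H where H0: "\<forall>v. bij_betw (H v) {q\<in>?A. St q = v} {q\<in>?B. St q = v}" by blast
  have H: "\<And>v. bij_betw (H v) {q\<in>?A. St q = v} {q\<in>?B. St q = v}" using H0 by blast
  define \<phi> where "\<phi> = (\<lambda>\<pi>. H (St \<pi>) \<pi>)"
  have img: "\<And>\<pi>. \<pi> \<in> ?A \<Longrightarrow> \<phi> \<pi> \<in> ?B \<and> St (\<phi> \<pi>) = St \<pi>"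
  proof -
    fix \<pi> assume p: "\<pi> \<in> ?A"
    have "H (St \<pi>) ` {q\<in>?A. St q = St \<pi>} = {q\<in>?B. St q = St \<pi>}" using H[of "St \<pi>"] by (simp add: bij_betw_def)
    moreover have "\<pi> \<in> {q\<in>?A. St q = St \<pi>}" using p by simp
    ultimately have "H (St \<pi>) \<pi> \<in> {q\<in>?B. St q = St \<pi>}" by blast
    thus "\<phi> \<pi> \<in> ?B \<and> St (\<phi> \<pi>) = St \<pi>" unfolding \<phi>_def by simp
  qed
  have "bij_betw \<phi> ?A ?B"
    unfolding bij_betw_def
  proof
    show "inj_on \<phi> ?A"
    proof (rule inj_onI)
      fix x y assume x: "x \<in> ?A" and y: "y \<in> ?A" and e: "\<phi> x = \<phi> y"
      have "St x = St y" using img x y e by metis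
      hence "H (St x) x = H (St x) y" using e unfolding \<phi>_def by simp
      note hx = this
      have ij: "inj_on (H (St x)) {q\<in>?A. St q = St x}" using H[of "St x"] by (simp add: bij_betw_def)
      have mx: "x \<in> {q\<in>?A. St q = St x}" using x by simp
      have my: "y \<in> {q\<in>?A. St q = St x}" using y \<open>St x = St y\<close> by simp
      show "x = y" by (rule inj_onD[OF ij hx mx my])
    qed
    show "\<phi> ` ?A = ?B"
    proof
      show "\<phi> ` ?A \<subseteq> ?B" using img by blast
      show "?B \<subseteq> \<phi> ` ?A"
      proof
        fix y assume y: "y \<in> ?B"
        moreover have "H (St y) ` {q\<in>?A. St q = St y} = {q\<in>?B. St q = St y}" using H[of "St y"] by (simp add: bij_betw_def)
        ultimately have "y \<in> H (St y) ` {q\<in>?A. St q = St y}" by simp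
        then obtain x where "x \<in> ?A" "St x = St y" "y = H (St y) x" by blast
        thus "y \<in> \<phi> ` ?A" unfolding \<phi>_def by force
      qed
    qed
  qed
  moreover have "\<forall>\<pi>\<in>?A. (Br \<pi>, Ides \<pi>, Lrmax \<pi>, Lrmin \<pi>, Iar \<pi>)
               = (Br (\<phi> \<pi>), Ides (\<phi> \<pi>), Lrmax (\<phi> \<pi>), Lrmin (\<phi> \<pi>), Iar (\<phi> \<pi>))"
    using img unfolding St_def by metis
  ultimately show ?thesis by blast
qed


end
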